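(* Consider the Markov switching model family of order $M$ and length $T$ built from the nonlinear Gaussian families $\mathcal{I}_{\mathcal{A}}^M$ (initial) and $\mathcal{G}_{\mathcal{B}}^M$ (transition) described in the context. Assume: (m1) Unique indexing: for all $b \neq b' \in \mathcal{B}$ there exists a set $\mathcal{Z}\subset\mathbb{R}^{mM}$ of nonzero Lebesgue measure such that for all $(\bm{z}_{t-1},\dots,\bm{z}_{t-M})\in\mathcal{Z}$, $\bm{m}(\bm{z}_{t-1},\dots,\bm{z}_{t-M},b)\neq \bm{m}(\bm{z}_{t-1},\dots,\bm{z}_{t-M},b')$ or $\bm{\Sigma}(\bm{z}_{t-1},\dots,\bm{z}_{t-M},b)\neq \bm{\Sigma}(\bm{z}_{t-1},\dots,\bm{z}_{t-M},b')$; and for all $a,a'\in\mathcal{A}$, $a\neq a' \Leftrightarrow \bm{\mu}(a)\neq\bm{\mu}(a')$ or $\bm{\Sigma}_1(a)\neq\bm{\Sigma}_1(a')$; (m2) for every $b\in\mathcal{B}$, the mean $\bm{m}(\cdot,b):\mathbb{R}^{mM}\to\mathbb{R}^m$ and covariance $\bm{\Sigma}(\cdot,b):\mathbb{R}^{mM}\to\mathbb{R}^{m\times m}$ are analytic functions. Then this MSM family is identifiable up to permutations in the sense stated in the context.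
   Context: Let $m,M,T$ be positive integers with $M<T$, and $\bm{z}_1,\dots,\bm{z}_T\in\mathbb{R}^m$. The initial family is $\mathcal{I}_{\mathcal{A}}^M=\{p_a(\bm{z}_{1:M})=\mathcal{N}(\bm{z}_{1:M}\mid\bm{\mu}(a),\bm{\Sigma}_1(a)) : a\in\mathcal{A}\}$ with $\bm{\Sigma}_1(a)\succ 0$. The transition family is $\mathcal{G}_{\mathcal{B}}^M=\{p_b(\bm{z}_t\mid\bm{z}_{t-1},\dots,\bm{z}_{t-M})=\mathcal{N}(\bm{z}_t\mid \bm{m}(\bm{z}_{t-1},\dots,\bm{z}_{t-M},b),\bm{\Sigma}(\bm{z}_{t-1},\dots,\bm{z}_{t-M},b)) : b\in\mathcal{B}\}$ with $\bm{\Sigma}(\cdot,b)\succ 0$, where the mean and covariance may be nonlinear in the lagged variables. The MSM family consists of all densities $p(\bm{z}_{1:T})=\sum_{i=1}^{C} c_i\, p_{a^i}(\bm{z}_{1:M})\prod_{t=M+1}^T p_{b^i_t}(\bm{z}_t\mid\bm{z}_{t-1},\dots,\bm{z}_{t-M})$, with $c_i>0$, $\sum_i c_i=1$, $C=K_0K^{T-M}$ for finite $K_0,K$ (number of initial and transition regimes), $a^i\in\mathcal{A}_0\subset\mathcal{A}$ with $|\mathcal{A}_0|=K_0$, $b^i_t\in\mathcal{B}_0\subset\mathcal{B}$ with $|\mathcal{B}_0|=K$, and the tuples $(a^i,b^i_{M+1},\dots,b^i_T)$ pairwise distinct (each $i$ corresponds to one path of discrete regimes $s_{M:T}\in[K_0]\times[K]^{T-M}$,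 with $c_i$ its probability). The family is identifiable up to permutations if for any two members $p$ (with $C,K_0,K,c_i,a^i,b^i_t$) and $\tilde p$ (with $\tilde C,\tilde K_0,\tilde K,\tilde c_j,\tilde a^j,\tilde b^j_t$) satisfying $p(\bm{z}_{1:T})=\tilde p(\bm{z}_{1:T})$ for all $\bm{z}_{1:T}\in\mathbb{R}^{mT}$, we have $C=\tilde C$, $K_0=\tilde K_0$, $K=\tilde K$, and for each $i$ there is some $j$ with: (1) $c_i=\tilde c_j$; (2) if $b^i_{t_1}=b^i_{t_2}$ for $M<t_1,t_2\le T$, $t_1\neq t_2$, then $\tilde b^j_{t_1}=\tilde b^j_{t_2}$; (3) $p_{a^i}(\bm{z}_{1:M})=p_{\tilde a^j}(\bm{z}_{1:M})$ for all $\bm{z}_{1:M}$; (4) $p_{b^i_t}(\bm{z}_t\mid\bm{z}_{t-1},\dots,\bm{z}_{t-M})=p_{\tilde b^j_t}(\bm{z}_t\mid\bm{z}_{t-1},\dots,\bm{z}_{t-M})$ for all arguments and all $M<t\le T$. *)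

theory Defs
  imports "HOL-Analysis.Analysis"
begin

definition posdef :: "real^'i^'i \<Rightarrow> bool" where
  "posdef S \<longleftrightarrow> transpose S = S \<and> (\<forall>x. x \<noteq> 0 \<longrightarrow> x \<bullet> (S *v x) > 0)"

definition gauss :: "real^'i \<Rightarrow> real^'i^'i \<Rightarrow> real^'i \<Rightarrow> real" where
  "gauss mu S x =
     exp (- (1/2) * ((x - mu) \<bullet> (matrix_inv S *v (x - mu))))
     / sqrt ((2 * pi) ^ CARD('i) * det S)"

definition real_analytic :: "(real^'i \<Rightarrow> real) \<Rightarrow> bool" where
  "real_analytic f \<longleftrightarrow>
     (\<forall>x. \<exists>r>0. \<exists>c :: ('i \<Rightarrow> nat) \<Rightarrow> real.
        \<forall>y\<in>ball x r.
          ((\<lambda>\<alpha>. c \<alpha> * (\<Prod>i\<in>UNIV. (y $ i - x $ i) ^ (\<alpha> i))) has_sum f y) UNIV)"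

definition analytic_vec :: "(real^'i \<Rightarrow> real^'j) \<Rightarrow> bool" where
  "analytic_vec f \<longleftrightarrow> (\<forall>j. real_analytic (\<lambda>x. f x $ j))"

definition analytic_mat :: "(real^'i \<Rightarrow> real^'j^'k) \<Rightarrow> bool" where
  "analytic_mat f \<longleftrightarrow> (\<forall>j k. real_analytic (\<lambda>x. f x $ k $ j))"

text \<open>Time series z_1,...,z_T are represented as functions nat => real^'m (only the
  values at 1..T matter). The lag type 'l has CARD('l) = M elements and a fixed
  bijection lagidx : 'l -> {1..M}. A point of R^{mM} is a vector indexed by 'm x 'l.\<close>

definition init_vec :: "('l::finite \<Rightarrow> nat) \<Rightarrow> (nat \<Rightarrow> real^'m) \<Rightarrow> real^('m \<times> 'l)" where
  "init_vec lagidx z = (\<chi> p. z (lagidx (snd p)) $ fst p)"   \<comment> \<open>z_{1:M}\<close>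

definition lag_vec :: "('l::finite \<Rightarrow> nat) \<Rightarrow> (nat \<Rightarrow> real^'m) \<Rightarrow> nat \<Rightarrow> real^('m \<times> 'l)" where
  "lag_vec lagidx z t = (\<chi> p. z (t - lagidx (snd p)) $ fst p)"   \<comment> \<open>(z_{t-1},...,z_{t-M})\<close>

definition msm_density ::
  "('a \<Rightarrow> real^('m::finite \<times> 'l::finite)) \<Rightarrow> ('a \<Rightarrow> real^('m \<times> 'l)^('m \<times> 'l))
   \<Rightarrow> (real^('m \<times> 'l) \<Rightarrow> 'b \<Rightarrow> real^'m) \<Rightarrow> (real^('m \<times> 'l) \<Rightarrow> 'b \<Rightarrow> real^'m^'m)
   \<Rightarrow> ('l \<Rightarrow> nat) \<Rightarrow> nat \<Rightarrow> nat
   \<Rightarrow> nat \<Rightarrow> (nat \<Rightarrow> real) \<Rightarrow> (nat \<Rightarrow> 'a) \<Rightarrow> (nat \<Rightarrow> nat \<Rightarrow> 'b)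
   \<Rightarrow> (nat \<Rightarrow> real^'m) \<Rightarrow> real" where
  "msm_density mu S1 mf Sf lagidx M T C c a b z =
     (\<Sum>i\<in>{1..C}. c i * gauss (mu (a i)) (S1 (a i)) (init_vec lagidx z)
        * (\<Prod>t\<in>{M+1..T}. gauss (mf (lag_vec lagidx z t) (b i t))
                                  (Sf (lag_vec lagidx z t) (b i t)) (z t)))"

definition msm_member ::
  "nat \<Rightarrow> nat \<Rightarrow> nat \<Rightarrow> nat \<Rightarrow> nat \<Rightarrow> (nat \<Rightarrow> real) \<Rightarrow> (nat \<Rightarrow> 'a) \<Rightarrow> (nat \<Rightarrow> nat \<Rightarrow> 'b) \<Rightarrow> bool"
  where
  "msm_member M T C K0 K c a b \<longleftrightarrow>
     C = K0 * K ^ (T - M) \<and>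
     (\<forall>i\<in>{1..C}. c i > 0) \<and> (\<Sum>i\<in>{1..C}. c i) = 1 \<and>
     (\<exists>A0 :: 'a set. \<exists>B0 :: 'b set. finite A0 \<and> card A0 = K0 \<and> finite B0 \<and> card B0 = K \<and>
        (\<forall>i\<in>{1..C}. a i \<in> A0 \<and> (\<forall>t\<in>{M+1..T}. b i t \<in> B0))) \<and>
     (\<forall>i\<in>{1..C}. \<forall>i'\<in>{1..C}. i \<noteq> i' \<longrightarrow>
        a i \<noteq> a i' \<or> (\<exists>t\<in>{M+1..T}. b i t \<noteq> b i' t))"

end

theory Submission
  imports Defs "HOL-Complex_Analysis.Complex_Analysis" "HOL-Computational_Algebra.Polynomial" "HOL-Real_Asymp.Real_Asymp"
begin

no_notation fps_nth (infixl "$" 75)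

lemma posdef_ker:
  fixes S :: "real^'n^'n"
  assumes "posdef S" "S *v x = 0" shows "x = 0"
  using assms unfolding posdef_def by (metis inner_zero_right less_irrefl)

lemma posdef_invertible:
  fixes S :: "real^'n^'n"
  assumes "posdef S" shows "invertible S"
proof -
  have "inj ((*v) S)"
  proof (rule injI)
    fix x y assume "S *v x = S *v y"
    then have "S *v (x - y) = 0" by (simp add: matrix_vector_mult_diff_distrib)
    then show "x = y" using posdef_ker[OF assms] by (metis right_minus_eq)
  qed
  then have "det (matrix ((*v) S)) \<noteq> 0"
    using det_nz_iff_inj[of "(*v) S"] by (simp add: matrix_vector_mul_linear)
  then show ?thesis by (simp add: invertible_det_nz)
qed

lemma minv:
  fixes S :: "real^'n^'n"
  assumes "invertible S" shows "S ** matrix_inv S = mat 1" "matrix_inv S ** S = mat 1"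
proof -
  have "\<exists>A'. S ** A' = mat 1 \<and> A' ** S = mat 1" using assms unfolding invertible_def by blast
  from someI_ex[OF this] show "S ** matrix_inv S = mat 1" "matrix_inv S ** S = mat 1"
    unfolding matrix_inv_def by auto
qed

lemma minv_sym:
  fixes S :: "real^'n^'n"
  assumes "posdef S" shows "transpose (matrix_inv S) = matrix_inv S"
proof -
  have inv: "invertible S" using posdef_invertible[OF assms] .
  have St: "transpose S = S" using assms unfolding posdef_def by simp
  have "transpose (matrix_inv S) ** S = mat 1"
    using minv(1)[OF inv] St by (metis matrix_transpose_mul transpose_mat)
  then have "transpose (matrix_inv S) = transpose (matrix_inv S) ** (S ** matrix_inv S)"
    using minv(1)[OF inv] by simp
  also have "\<dots> = matrix_inv S" using \<open>transpose (matrix_inv S) ** S = mat 1\<close>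
    by (simp add: matrix_mul_assoc)
  finally show ?thesis .
qed

lemma sym_inner_swap:
  fixes E :: "real^'n^'n"
  assumes "transpose E = E" shows "v \<bullet> (E *v u) = u \<bullet> (E *v v)"
proof -
  have "v \<bullet> (E *v u) = (v v* E) \<bullet> u" by (simp add: dot_lmul_matrix)
  also have "v v* E = transpose E *v v" by (metis vector_transpose_matrix transpose_transpose)
  finally show ?thesis using assms by (simp add: inner_commute)
qed

lemma sym_quad_zero:
  fixes E :: "real^'n^'n"
  assumes "transpose E = E" "\<forall>v. v \<bullet> (E *v v) = 0" shows "E = 0"
proof -
  have "E *v v = 0" for v
  proof -
    let ?u = "E *v v"
    have "(?u + v) \<bullet> (E *v (?u + v)) = ?u \<bullet> (E *v ?u) + ?u \<bullet> (E *v v) + v \<bullet> (E *v ?u) + v \<bullet> (E *v v)"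
      by (simp add: matrix_vector_right_distrib inner_add_left inner_add_right)
    then have "?u \<bullet> (E *v v) + v \<bullet> (E *v ?u) = 0" using assms(2) by simp
    then have "?u \<bullet> ?u = 0" using sym_inner_swap[OF assms(1), of v ?u] by simp
    then show ?thesis by simp
  qed
  then show ?thesis by (intro matrix_eq[THEN iffD2]) simp
qed

lemma lim1: fixes a b :: real assumes "a < 0 \<or> (a = 0 \<and> b < 0)"
  shows "((\<lambda>s. exp (a * s^2 + b * s)) \<longlongrightarrow> 0) at_top"
  using assms
proof
  assume "a < 0" then show ?thesis by real_asymp
next
  assume "a = 0 \<and> b < 0" then show ?thesis by real_asymp
qed

lemma exp_quad_indep_all:
  fixes P :: "(real \<times> real) set"
  assumes fin: "finite P" and z: "\<forall>s. (\<Sum>p\<in>P. D p * exp (fst p * s^2 + snd p * s)) = 0"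
  shows "\<forall>p\<in>P. D p = 0"
proof (rule ccontr)
  assume nt: "\<not> (\<forall>p\<in>P. D p = 0)"
  define P' where "P' = {p\<in>P. D p \<noteq> 0}"
  have P'ne: "P' \<noteq> {}" and finP': "finite P'" using nt fin unfolding P'_def by auto
  define a where "a = Max (fst ` P')"
  define P'' where "P'' = {p\<in>P'. fst p = a}"
  have "a \<in> fst ` P'" unfolding a_def using P'ne finP' by simp
  then have P''ne: "P'' \<noteq> {}" unfolding P''_def by auto
  have finP'': "finite P''" using finP' unfolding P''_def by simp
  define b where "b = Max (snd ` P'')"
  have "b \<in> snd ` P''" unfolding b_def using P''ne finP'' by simp
  then have abP'': "(a, b) \<in> P''" unfolding P''_def by auto
  then have abP': "(a,b) \<in> P'" unfolding P''_def by simp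
  have lex: "fst p < a \<or> (fst p = a \<and> snd p < b)" if "p \<in> P'" "p \<noteq> (a,b)" for p
  proof -
    have "fst p \<le> a" unfolding a_def using that finP' by simp
    moreover have "snd p \<le> b" if "fst p = a"
      unfolding b_def using \<open>p \<in> P'\<close> finP'' that unfolding P''_def by simp
    ultimately show ?thesis using \<open>p \<noteq> (a,b)\<close> by (cases p) force
  qed
  define g where "g s = (\<Sum>p\<in>P'. D p * exp ((fst p - a) * s^2 + (snd p - b) * s))" for s
  have g0: "g s = 0" for s
  proof -
    have "(\<Sum>p\<in>P. D p * exp (fst p * s^2 + snd p * s)) = (\<Sum>p\<in>P'. D p * exp (fst p * s^2 + snd p * s))"
      unfolding P'_def by (rule sum.mono_neutral_right[OF fin]) auto
    then have "(\<Sum>p\<in>P'. D p * exp (fst p * s^2 + snd p * s)) = 0" using z by simp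
    then have "exp (- (a * s^2 + b * s)) * (\<Sum>p\<in>P'. D p * exp (fst p * s^2 + snd p * s)) = 0" by simp
    moreover have "exp (- (a * s^2 + b * s)) * (\<Sum>p\<in>P'. D p * exp (fst p * s^2 + snd p * s)) = g s"
      unfolding g_def sum_distrib_left
    proof (rule sum.cong)
      fix p assume "p \<in> P'"
      have "exp (- (a * s^2 + b * s)) * exp (fst p * s^2 + snd p * s) = exp ((fst p - a) * s^2 + (snd p - b) * s)"
        by (simp add: exp_add[symmetric] algebra_simps)
      then show "exp (- (a * s^2 + b * s)) * (D p * exp (fst p * s^2 + snd p * s)) = D p * exp ((fst p - a) * s^2 + (snd p - b) * s)"
        by (metis mult.left_commute)
    qed simp
    ultimately show ?thesis by simp
  qed
  have "(g \<longlongrightarrow> (\<Sum>p\<in>P'. D p * (if p = (a,b) then 1 else 0))) at_top"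
    unfolding g_def
  proof (rule tendsto_sum, rule tendsto_mult_left)
    fix p assume "p \<in> P'"
    show "((\<lambda>s. exp ((fst p - a) * s^2 + (snd p - b) * s)) \<longlongrightarrow> (if p = (a,b) then 1 else 0)) at_top"
    proof (cases "p = (a,b)")
      case True then show ?thesis by simp
    next
      case False
      then have "fst p - a < 0 \<or> (fst p - a = 0 \<and> snd p - b < 0)" using lex[OF \<open>p\<in>P'\<close>] by auto
      from lim1[OF this] False show ?thesis by simp
    qed
  qed
  also have "(\<Sum>p\<in>P'. D p * (if p = (a,b) then 1 else 0)) = D (a,b)"
    using abP' finP' by (simp add: sum.delta' if_distrib cong: if_cong)
  finally have "(g \<longlongrightarrow> D (a,b)) at_top" .
  moreover have "g = (\<lambda>_. 0)" using g0 by auto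
  then have "(g \<longlongrightarrow> 0) at_top" by simp
  ultimately have "D (a,b) = 0" using tendsto_unique by (metis trivial_limit_at_top_linorder)
  then show False using abP' unfolding P'_def by simp
qed

lemma exp_quad_indep:
  fixes P :: "(real \<times> real) set"
  assumes fin: "finite P" and d: "\<delta> > 0"
    and z: "\<forall>s. \<bar>s\<bar> < \<delta> \<longrightarrow> (\<Sum>p\<in>P. D p * exp (fst p * s^2 + snd p * s)) = 0"
  shows "\<forall>p\<in>P. D p = 0"
proof (rule exp_quad_indep_all[OF fin], rule allI)
  fix s :: real
  define f where "f w = (\<Sum>p\<in>P. complex_of_real (D p) * exp (of_real (fst p) * w^2 + of_real (snd p) * w))" for w :: complex
  have fr: "f (of_real t) = of_real (\<Sum>p\<in>P. D p * exp (fst p * t^2 + snd p * t))" for t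
    unfolding f_def of_real_sum of_real_mult exp_of_real[symmetric] by simp
  have hol: "f holomorphic_on UNIV" unfolding f_def by (intro holomorphic_intros)
  define U :: "complex set" where "U = of_real ` {t. \<bar>t\<bar> < \<delta>}"
  have U0: "f w = 0" if wU: "w \<in> U" for w
  proof -
    obtain t where t: "w = of_real t" "\<bar>t\<bar> < \<delta>" using wU unfolding U_def by blast
    show ?thesis using fr[of t] z t by (metis of_real_0)
  qed
  have lim: "0 islimpt U"
  proof (rule islimpt_approachable[THEN iffD2], intro allI impI)
    fix e :: real assume "e > 0"
    let ?t = "min \<delta> e / 2"
    have "\<bar>?t\<bar> < \<delta>" using d \<open>e>0\<close> by auto
    then have "complex_of_real ?t \<in> U" unfolding U_def by blast
    moreover have "complex_of_real ?t \<noteq> 0" using d \<open>e>0\<close> by simp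
    moreover have "dist (complex_of_real ?t) 0 < e" using d \<open>e>0\<close> by (simp add: dist_norm)
    ultimately show "\<exists>x'\<in>U. x' \<noteq> 0 \<and> dist x' 0 < e" by blast
  qed
  have "f (of_real s) = 0"
    by (rule analytic_continuation[OF hol open_UNIV connected_UNIV subset_UNIV _ lim U0]) auto
  then show "(\<Sum>p\<in>P. D p * exp (fst p * s^2 + snd p * s)) = 0" using fr[of s] by (metis of_real_eq_0_iff)
qed

lemma generic_point:
  fixes F :: "'k \<Rightarrow> real^'n \<Rightarrow> real"
  assumes "finite K"
  shows "(\<forall>k\<in>K. \<exists>v. F k v \<noteq> 0) \<Longrightarrow> (\<forall>k\<in>K. \<forall>v w. \<exists>p. \<forall>t. F k (v + t *\<^sub>R w) = poly p t)
     \<Longrightarrow> \<exists>v. \<forall>k\<in>K. F k v \<noteq> 0"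
  using assms
proof (induction K rule: finite_induct)
  case empty then show ?case by simp
next
  case (insert k K)
  obtain v0 where v0: "\<forall>j\<in>K. F j v0 \<noteq> 0" using insert by auto
  obtain w where w: "F k w \<noteq> 0" using insert by auto
  define p where "p j = (SOME p. \<forall>t. F j (v0 + t *\<^sub>R (w - v0)) = poly p t)" for j
  have p: "F j (v0 + t *\<^sub>R (w - v0)) = poly (p j) t" if "j \<in> insert k K" for j t
  proof -
    have "\<exists>p. \<forall>t. F j (v0 + t *\<^sub>R (w - v0)) = poly p t" using insert(5) that by blast
    from someI_ex[OF this] show ?thesis unfolding p_def by blast
  qed
  have pnz: "p j \<noteq> 0" if "j \<in> insert k K" for j
  proof
    assume "p j = 0"
    then have "F j (v0 + t *\<^sub>R (w - v0)) = 0" for t using p[OF that, of t] by simp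
    from this[of 0] this[of 1] that v0 w show False by auto
  qed
  have fin: "finite (\<Union>j\<in>insert k K. {t. poly (p j) t = 0})"
    using insert(1) pnz by (auto intro: poly_roots_finite)
  obtain t where t: "t \<notin> (\<Union>j\<in>insert k K. {t. poly (p j) t = 0})"
    using ex_new_if_finite[OF infinite_UNIV_char_0 fin] by blast
  show ?case
  proof (rule exI[of _ "v0 + t *\<^sub>R (w - v0)"], intro ballI)
    fix j assume "j \<in> insert k K"
    then show "F j (v0 + t *\<^sub>R (w - v0)) \<noteq> 0" using p t by auto
  qed
qed

lemma quad_line:
  fixes E :: "real^'n^'n"
  shows "(v + t *\<^sub>R u) \<bullet> (E *v (v + t *\<^sub>R u)) = poly [:v \<bullet> (E *v v), v \<bullet> (E *v u) + u \<bullet> (E *v v), u \<bullet> (E *v u):] t"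
  by (simp add: matrix_vector_right_distrib matrix_vector_mult_scaleR inner_add_left inner_add_right algebra_simps power2_eq_square)

lemma lin_line:
  fixes c :: "real^'n"
  shows "(v + t *\<^sub>R u) \<bullet> c = poly [:v \<bullet> c, u \<bullet> c:] t"
  by (simp add: inner_add_left algebra_simps)

lemma gauss_line:
  fixes mu y0 v :: "real^'n" and S :: "real^'n^'n"
  assumes pd: "posdef S"
  shows "gauss mu S (y0 + s *\<^sub>R v) =
     (exp (-(1/2) * ((y0 - mu) \<bullet> (matrix_inv S *v (y0 - mu)))) / sqrt ((2*pi)^CARD('n) * det S))
     * exp ((-(1/2) * (v \<bullet> (matrix_inv S *v v))) * s^2 + (-(v \<bullet> (matrix_inv S *v (y0 - mu)))) * s)"
proof -
  define A where "A = matrix_inv S"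
  define w where "w = y0 - mu"
  have sym: "transpose A = A" unfolding A_def using minv_sym[OF pd] .
  have e1: "y0 + s *\<^sub>R v - mu = w + s *\<^sub>R v" unfolding w_def by simp
  have "(w + s *\<^sub>R v) \<bullet> (A *v (w + s *\<^sub>R v)) = poly [:w \<bullet> (A *v w), w \<bullet> (A *v v) + v \<bullet> (A *v w), v \<bullet> (A *v v):] s"
    by (rule quad_line)
  also have "\<dots> = w \<bullet> (A *v w) + 2 * s * (v \<bullet> (A *v w)) + s^2 * (v \<bullet> (A *v v))"
    using sym_inner_swap[OF sym, of w v] by (simp add: algebra_simps power2_eq_square)
  finally have q: "(w + s *\<^sub>R v) \<bullet> (A *v (w + s *\<^sub>R v)) = w \<bullet> (A *v w) + 2 * s * (v \<bullet> (A *v w)) + s^2 * (v \<bullet> (A *v v))" .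
  have "exp (- (1/2) * ((w + s *\<^sub>R v) \<bullet> (A *v (w + s *\<^sub>R v)))) =
        exp (-(1/2) * (w \<bullet> (A *v w))) * exp ((-(1/2) * (v \<bullet> (A *v v))) * s^2 + (-(v \<bullet> (A *v w))) * s)"
    unfolding q exp_add[symmetric] by (simp add: algebra_simps)
  then show ?thesis unfolding gauss_def e1[folded w_def] A_def[symmetric] w_def[symmetric]
    by (simp add: e1)
qed

lemma gauss_den_nz:
  fixes S :: "real^'n^'n"
  assumes "posdef S" shows "sqrt ((2*pi)^CARD('n) * det S) \<noteq> 0"
  using posdef_invertible[OF assms] by (simp add: invertible_det_nz)

lemma minv_ker:
  fixes S :: "real^'n^'n"
  assumes "posdef S" "matrix_inv S *v x = 0" shows "x = 0"
proof -
  have "x = S *v (matrix_inv S *v x)"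
    using minv(1)[OF posdef_invertible[OF assms(1)]] by (simp add: matrix_vector_mul_assoc)
  then show ?thesis using assms(2) by simp
qed

lemma minv_inj:
  fixes S S' :: "real^'n^'n"
  assumes "posdef S" "posdef S'" "matrix_inv S = matrix_inv S'" shows "S = S'"
proof -
  have "S = S ** (matrix_inv S' ** S')" using minv(2)[OF posdef_invertible[OF assms(2)]] by simp
  also have "\<dots> = (S ** matrix_inv S) ** S'" using assms(3) by (simp add: matrix_mul_assoc)
  also have "\<dots> = S'" using minv(1)[OF posdef_invertible[OF assms(1)]] by simp
  finally show ?thesis .
qed

lemma pair_sep:
  fixes mu mu' y0 :: "real^'n" and S S' :: "real^'n^'n"
  assumes pd: "posdef S" "posdef S'" and ne: "(mu, S) \<noteq> (mu', S')"
  shows "\<exists>v. (v \<bullet> ((matrix_inv S - matrix_inv S') *v v))^2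
            + (v \<bullet> (matrix_inv S *v (y0 - mu) - matrix_inv S' *v (y0 - mu')))^2 \<noteq> 0"
proof (rule ccontr)
  assume "\<not> ?thesis"
  then have h: "\<And>v. v \<bullet> ((matrix_inv S - matrix_inv S') *v v) = 0 \<and>
       v \<bullet> (matrix_inv S *v (y0 - mu) - matrix_inv S' *v (y0 - mu')) = 0"
    by (metis (no_types, lifting) add_nonneg_eq_0_iff zero_le_power2 power_eq_0_iff zero_neq_numeral)
  have "transpose (matrix_inv S - matrix_inv S') = matrix_inv S - matrix_inv S'"
    using minv_sym[OF pd(1)] minv_sym[OF pd(2)] by (simp add: transpose_def vec_eq_iff)
  from sym_quad_zero[OF this] h have "matrix_inv S - matrix_inv S' = 0" by blast
  then have AA: "matrix_inv S = matrix_inv S'" by simp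
  then have SS: "S = S'" using minv_inj pd by blast
  let ?c = "matrix_inv S *v (y0 - mu) - matrix_inv S' *v (y0 - mu')"
  have "?c \<bullet> ?c = 0" using h by blast
  then have "?c = 0" by simp
  then have "matrix_inv S *v ((y0 - mu) - (y0 - mu')) = 0"
    using AA by (simp add: matrix_vector_mult_diff_distrib)
  then have "(y0 - mu) - (y0 - mu') = 0" using minv_ker[OF pd(1)] by blast
  then have "mu = mu'" by simp
  with SS ne show False by simp
qed

lemma gauss_indep:
  fixes Q :: "((real^'n) \<times> (real^'n^'n)) set"
  assumes fin: "finite Q" and pd: "\<forall>q\<in>Q. posdef (snd q)" and W: "open W" "y0 \<in> W"
    and z: "\<forall>y\<in>W. (\<Sum>q\<in>Q. E q * gauss (fst q) (snd q) y) = 0"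
  shows "\<forall>q\<in>Q. E q = 0"
proof -
  define Am where "Am q = matrix_inv (snd q)" for q :: "(real^'n) \<times> (real^'n^'n)"
  define wv where "wv q = y0 - fst q" for q :: "(real^'n) \<times> (real^'n^'n)"
  define K where "K = {(q,q'). q \<in> Q \<and> q' \<in> Q \<and> q \<noteq> q'}"
  have "K \<subseteq> Q \<times> Q" unfolding K_def by auto
  then have finK: "finite K" using fin finite_subset by blast
  define F where "F k v = (v \<bullet> ((Am (fst k) - Am (snd k)) *v v))^2
            + (v \<bullet> (Am (fst k) *v wv (fst k) - Am (snd k) *v wv (snd k)))^2" for k v
  have F1: "\<forall>k\<in>K. \<exists>v. F k v \<noteq> 0"
  proof
    fix k assume "k \<in> K"
    then obtain q q' where k: "k = (q,q')" "q \<in> Q" "q' \<in> Q" "q \<noteq> q'" unfolding K_def by auto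
    obtain mu S mu' S' where qq: "q = (mu,S)" "q' = (mu',S')" by (cases q, cases q')
    have "posdef S" "posdef S'" using pd k qq by auto
    moreover have "(mu,S) \<noteq> (mu',S')" using k qq by simp
    ultimately obtain v where "(v \<bullet> ((matrix_inv S - matrix_inv S') *v v))^2
            + (v \<bullet> (matrix_inv S *v (y0 - mu) - matrix_inv S' *v (y0 - mu')))^2 \<noteq> 0"
      using pair_sep by blast
    then show "\<exists>v. F k v \<noteq> 0" unfolding F_def k Am_def wv_def qq by (intro exI[of _ v]) simp
  qed
  have F2: "\<forall>k\<in>K. \<forall>v w. \<exists>p. \<forall>t. F k (v + t *\<^sub>R w) = poly p t"
  proof (intro ballI allI)
    fix k v w
    let ?E = "Am (fst k) - Am (snd k)" and ?c = "Am (fst k) *v wv (fst k) - Am (snd k) *v wv (snd k)"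
    let ?pa = "[:v \<bullet> (?E *v v), v \<bullet> (?E *v w) + w \<bullet> (?E *v v), w \<bullet> (?E *v w):]"
    let ?pb = "[:v \<bullet> ?c, w \<bullet> ?c:]"
    show "\<exists>p. \<forall>t. F k (v + t *\<^sub>R w) = poly p t"
      by (rule exI[of _ "?pa * ?pa + ?pb * ?pb"], simp only: F_def quad_line, simp only: lin_line poly_add poly_mult power2_eq_square, simp)
  qed
  obtain v where v: "\<forall>k\<in>K. F k v \<noteq> 0" using generic_point[OF finK F1 F2] by blast
  define \<phi> where "\<phi> q = (-(1/2) * (v \<bullet> (Am q *v v)), -(v \<bullet> (Am q *v wv q)))" for q
  have inj: "inj_on \<phi> Q"
  proof (rule inj_onI, rule ccontr)
    fix q q' assume "q \<in> Q" "q' \<in> Q" "\<phi> q = \<phi> q'" "q \<noteq> q'"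
    then have "(q,q') \<in> K" unfolding K_def by simp
    moreover have "F (q,q') v = 0" using \<open>\<phi> q = \<phi> q'\<close> unfolding F_def \<phi>_def
      by (simp add: matrix_vector_mult_diff_rdistrib inner_diff_right)
    ultimately show False using v by blast
  qed
  define c where "c q = exp (-(1/2) * (wv q \<bullet> (Am q *v wv q))) / sqrt ((2*pi)^CARD('n) * det (snd q))" for q
  have cnz: "c q \<noteq> 0" if "q \<in> Q" for q
    unfolding c_def using gauss_den_nz[of "snd q"] pd that by simp
  have gl: "gauss (fst q) (snd q) (y0 + s *\<^sub>R v) = c q * exp (fst (\<phi> q) * s^2 + snd (\<phi> q) * s)"
    if "q \<in> Q" for q s
    unfolding c_def \<phi>_def Am_def wv_def using gauss_line[of "snd q" "fst q" y0 s v] pd that by simp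
  obtain e where e: "e > 0" "ball y0 e \<subseteq> W" using W open_contains_ball by blast
  define \<delta> where "\<delta> = e / (norm v + 1)"
  have nv: "norm v + 1 > 0" by (metis add_pos_nonneg norm_ge_zero zero_less_one add.commute)
  have d: "\<delta> > 0" unfolding \<delta>_def using e nv by simp
  define D where "D p = E (the_inv_into Q \<phi> p) * c (the_inv_into Q \<phi> p)" for p
  have "\<forall>p\<in>\<phi> ` Q. D p = 0"
  proof (rule exp_quad_indep[OF _ d], simp add: fin, intro allI impI)
    fix s :: real assume s: "\<bar>s\<bar> < \<delta>"
    have "norm (s *\<^sub>R v) < e"
    proof -
      have "norm (s *\<^sub>R v) = \<bar>s\<bar> * norm v" by simp
      also have "\<dots> \<le> \<bar>s\<bar> * (norm v + 1)" by (simp add: mult_left_mono)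
      also have "\<dots> < \<delta> * (norm v + 1)" using s nv by (simp add: mult_strict_right_mono)
      also have "\<dots> = e" unfolding \<delta>_def using nv by simp
      finally show ?thesis .
    qed
    then have "y0 + s *\<^sub>R v \<in> W" using e by (auto simp: dist_norm)
    then have "0 = (\<Sum>q\<in>Q. E q * gauss (fst q) (snd q) (y0 + s *\<^sub>R v))" using z by simp
    also have "\<dots> = (\<Sum>q\<in>Q. D (\<phi> q) * exp (fst (\<phi> q) * s^2 + snd (\<phi> q) * s))"
      by (rule sum.cong) (simp_all add: gl D_def the_inv_into_f_f[OF inj])
    also have "\<dots> = (\<Sum>p\<in>\<phi> ` Q. D p * exp (fst p * s^2 + snd p * s))"
      by (simp add: sum.reindex[OF inj])
    finally show "(\<Sum>p\<in>\<phi> ` Q. D p * exp (fst p * s^2 + snd p * s)) = 0" by simp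
  qed
  then show ?thesis using cnz unfolding D_def by (simp add: the_inv_into_f_f[OF inj])
qed

lemma real_powser_zero:
  fixes a :: "nat \<Rightarrow> real" and g :: "real \<Rightarrow> real"
  assumes rho: "\<rho> > 0"
    and hs: "\<forall>\<sigma>. \<bar>\<sigma>\<bar> < \<rho> \<longrightarrow> ((\<lambda>k. a k * \<sigma>^k) has_sum g \<sigma>) UNIV"
    and s1: "\<bar>\<sigma>1\<bar> < \<rho>" and e1: "e1 > 0"
    and z: "\<forall>\<sigma>. \<bar>\<sigma> - \<sigma>1\<bar> < e1 \<longrightarrow> g \<sigma> = 0"
  shows "\<forall>\<sigma>. \<bar>\<sigma>\<bar> < \<rho> \<longrightarrow> g \<sigma> = 0"
proof -
  define G where "G w = (\<Sum>n. complex_of_real (a n) * w^n)" for w :: complex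
  have sm: "(\<lambda>n. complex_of_real (a n) * (w - 0)^n) sums G w" if "w \<in> ball 0 \<rho>" for w
  proof -
    have "\<bar>norm w\<bar> < \<rho>" using that by simp
    then have "((\<lambda>k. a k * (norm w)^k) has_sum g (norm w)) UNIV" using hs by blast
    then have "(\<lambda>k. a k * (norm w)^k) summable_on UNIV" by (rule has_sum_imp_summable)
    then have "(\<lambda>k. norm (a k * (norm w)^k)) summable_on UNIV"
      by (rule summable_on_iff_abs_summable_on_real[THEN iffD1])
    then have "summable (\<lambda>k. norm (a k * (norm w)^k))"
      by (rule summable_on_UNIV_nonneg_real_iff[THEN iffD1, rotated]) simp
    then have "summable (\<lambda>n. complex_of_real (a n) * w^n)"
      by (rule summable_norm_cancel[OF summable_comparison_test[rotated]])
         (auto simp: norm_mult norm_power)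
    then show ?thesis unfolding G_def by (simp add: summable_sums)
  qed
  have hol: "G holomorphic_on ball 0 \<rho>" by (rule power_series_holomorphic[OF sm])
  have Gr: "G (of_real \<sigma>) = of_real (g \<sigma>)" if "\<bar>\<sigma>\<bar> < \<rho>" for \<sigma>
  proof -
    have "(\<lambda>k. a k * \<sigma>^k) sums g \<sigma>" using hs that has_sum_imp_sums by blast
    then have "(\<lambda>k. complex_of_real (a k * \<sigma>^k)) sums of_real (g \<sigma>)" by (rule sums_of_real_iff[THEN iffD2])
    moreover have "(\<lambda>k. complex_of_real (a k * \<sigma>^k)) sums G (of_real \<sigma>)" using sm[of "of_real \<sigma>"] that by simp
    ultimately show ?thesis using sums_unique2 by blast
  qed
  define e where "e = min e1 (\<rho> - \<bar>\<sigma>1\<bar>)"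
  have e: "e > 0" unfolding e_def using e1 s1 by simp
  define U where "U = complex_of_real ` {\<sigma>. \<bar>\<sigma> - \<sigma>1\<bar> < e}"
  have U: "U \<subseteq> ball 0 \<rho>"
  proof
    fix w assume "w \<in> U"
    then obtain \<sigma> where \<sigma>: "w = of_real \<sigma>" "\<bar>\<sigma> - \<sigma>1\<bar> < e" unfolding U_def by blast
    have "e \<le> \<rho> - \<bar>\<sigma>1\<bar>" unfolding e_def by simp
    then have "\<bar>\<sigma>\<bar> < \<rho>" using \<sigma>(2) by arith
    then show "w \<in> ball 0 \<rho>" using \<sigma>(1) by simp
  qed
  have U0: "G w = 0" if wU: "w \<in> U" for w
  proof -
    obtain \<sigma> where \<sigma>: "w = of_real \<sigma>" "\<bar>\<sigma> - \<sigma>1\<bar> < e" using wU unfolding U_def by blast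
    have "e \<le> \<rho> - \<bar>\<sigma>1\<bar>" "e \<le> e1" unfolding e_def by simp_all
    then have s2: "\<bar>\<sigma>\<bar> < \<rho>" "\<bar>\<sigma> - \<sigma>1\<bar> < e1" using \<sigma>(2) by arith+
    then have "g \<sigma> = 0" using z by blast
    then show ?thesis using Gr[OF s2(1)] \<sigma>(1) by simp
  qed
  have lim: "of_real \<sigma>1 islimpt U"
  proof (rule islimpt_approachable[THEN iffD2], intro allI impI)
    fix d :: real assume "d > 0"
    let ?t = "\<sigma>1 + min e d / 2"
    have "\<bar>?t - \<sigma>1\<bar> < e" using e \<open>d>0\<close> by auto
    then have "complex_of_real ?t \<in> U" unfolding U_def by blast
    moreover have "complex_of_real ?t \<noteq> of_real \<sigma>1" using e \<open>d>0\<close> by simp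
    moreover have "dist (complex_of_real ?t) (of_real \<sigma>1) < d" using e \<open>d>0\<close>
      by (simp add: dist_norm flip: of_real_diff)
    ultimately show "\<exists>x'\<in>U. x' \<noteq> of_real \<sigma>1 \<and> dist x' (of_real \<sigma>1) < d" by blast
  qed
  show ?thesis
  proof (intro allI impI)
    fix \<sigma> :: real assume s: "\<bar>\<sigma>\<bar> < \<rho>"
    have "G (of_real \<sigma>) = 0"
      by (rule analytic_continuation[OF hol open_ball convex_connected[OF convex_ball] U _ lim U0])
         (use s1 s in auto)
    then show "g \<sigma> = 0" using Gr[OF s] by simp
  qed
qed

lemma real_analytic_1d_identity:
  fixes \<psi> :: "real \<Rightarrow> real"
  assumes loc: "\<forall>s. \<exists>\<rho>>0. \<exists>a. \<forall>\<sigma>. \<bar>\<sigma>\<bar> < \<rho> \<longrightarrow> ((\<lambda>k. a k * \<sigma>^k) has_sum \<psi> (s + \<sigma>)) UNIV"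
    and e: "e > 0" and z: "\<forall>s. \<bar>s\<bar> < e \<longrightarrow> \<psi> s = 0"
  shows "\<psi> t = 0"
proof -
  define N where "N = {s. \<exists>e>0. \<forall>t. \<bar>t - s\<bar> < e \<longrightarrow> \<psi> t = 0}"
  have "0 \<in> N" unfolding N_def using e z by auto
  have opN: "open N" unfolding open_dist
  proof (intro ballI)
    fix s assume "s \<in> N"
    then obtain e' where e': "e' > 0" "\<forall>t. \<bar>t - s\<bar> < e' \<longrightarrow> \<psi> t = 0" unfolding N_def by blast
    show "\<exists>d>0. \<forall>y. dist y s < d \<longrightarrow> y \<in> N"
    proof (rule exI[of _ "e'/2"], intro conjI allI impI)
      fix y assume y: "dist y s < e'/2"
      have "\<psi> t = 0" if "\<bar>t - y\<bar> < e'/2" for t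
      proof -
        have "\<bar>t - s\<bar> < e'" using y that unfolding dist_real_def by arith
        then show ?thesis using e' by blast
      qed
      then show "y \<in> N" unfolding N_def using e' by (intro CollectI exI[of _ "e'/2"]) auto
    qed (use e' in simp)
  qed
  have clN: "closed N" unfolding closed_limpt
  proof (intro allI impI)
    fix s assume lp: "s islimpt N"
    obtain \<rho> a where \<rho>: "\<rho> > 0" "\<forall>\<sigma>. \<bar>\<sigma>\<bar> < \<rho> \<longrightarrow> ((\<lambda>k. a k * \<sigma>^k) has_sum \<psi> (s + \<sigma>)) UNIV"
      using loc by blast
    obtain s1 where s1: "s1 \<in> N" "dist s1 s < \<rho>" using lp \<rho>(1) islimpt_approachable by blast
    obtain e1 where e1: "e1 > 0" "\<forall>t. \<bar>t - s1\<bar> < e1 \<longrightarrow> \<psi> t = 0" using s1(1) unfolding N_def by blast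
    have "\<forall>\<sigma>. \<bar>\<sigma>\<bar> < \<rho> \<longrightarrow> \<psi> (s + \<sigma>) = 0"
    proof (rule real_powser_zero[OF \<rho>(1), of a "\<lambda>\<sigma>. \<psi> (s + \<sigma>)" "s1 - s" e1])
      show "\<forall>\<sigma>. \<bar>\<sigma>\<bar> < \<rho> \<longrightarrow> ((\<lambda>k. a k * \<sigma>^k) has_sum \<psi> (s + \<sigma>)) UNIV" using \<rho>(2) .
      show "\<bar>s1 - s\<bar> < \<rho>" using s1(2) by (simp add: dist_real_def)
      show "\<forall>\<sigma>. \<bar>\<sigma> - (s1 - s)\<bar> < e1 \<longrightarrow> \<psi> (s + \<sigma>) = 0"
      proof (intro allI impI)
        fix \<sigma> assume "\<bar>\<sigma> - (s1 - s)\<bar> < e1"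
        then have "\<bar>(s + \<sigma>) - s1\<bar> < e1" by arith
        then show "\<psi> (s + \<sigma>) = 0" using e1(2) by blast
      qed
    qed (use e1 in auto)
    then have "\<forall>t. \<bar>t - s\<bar> < \<rho> \<longrightarrow> \<psi> t = 0"
    proof (intro allI impI)
      fix t assume "\<forall>\<sigma>. \<bar>\<sigma>\<bar> < \<rho> \<longrightarrow> \<psi> (s + \<sigma>) = 0" "\<bar>t - s\<bar> < \<rho>"
      then have "\<psi> (s + (t - s)) = 0" by blast
      then show "\<psi> t = 0" by simp
    qed
    then show "s \<in> N" unfolding N_def using \<rho>(1) by blast
  qed
  have "N = UNIV" using clopen[of N] opN clN \<open>0 \<in> N\<close> by blast
  then have "t \<in> N" by simp
  then show ?thesis unfolding N_def by force
qed

definition deg :: "('i::finite \<Rightarrow> nat) \<Rightarrow> nat" where "deg \<alpha> = (\<Sum>i\<in>UNIV. \<alpha> i)"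

lemma finite_deg: "finite {\<alpha> :: 'i::finite \<Rightarrow> nat. deg \<alpha> = k}"
proof -
  have "{\<alpha> :: 'i \<Rightarrow> nat. deg \<alpha> = k} \<subseteq> Pi\<^sub>E UNIV (\<lambda>_. {..k})"
  proof
    fix \<alpha> :: "'i \<Rightarrow> nat" assume "\<alpha> \<in> {\<alpha>. deg \<alpha> = k}"
    then have "\<alpha> i \<le> k" for i unfolding deg_def using member_le_sum[of i UNIV \<alpha>] by simp
    then show "\<alpha> \<in> Pi\<^sub>E UNIV (\<lambda>_. {..k})" by (simp add: PiE_UNIV_domain)
  qed
  moreover have "finite (Pi\<^sub>E (UNIV :: 'i set) (\<lambda>_. {..k}))" by (rule finite_PiE) auto
  ultimately show ?thesis by (rule finite_subset)
qed

lemma prod_pow_deg: "(\<Prod>i\<in>UNIV. (s * u i) ^ (\<alpha> i)) = s ^ deg \<alpha> * (\<Prod>i\<in>UNIV. u i ^ (\<alpha> i))"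
  for s :: real and \<alpha> :: "'i::finite \<Rightarrow> nat"
  by (simp add: deg_def power_mult_distrib prod.distrib power_sum)

lemma analytic_line:
  fixes f :: "real^'i \<Rightarrow> real"
  assumes "real_analytic f"
  shows "\<exists>\<rho>>0. \<exists>a. \<forall>\<sigma>. \<bar>\<sigma>\<bar> < \<rho> \<longrightarrow> ((\<lambda>k. a k * \<sigma>^k) has_sum f (p + \<sigma> *\<^sub>R u)) UNIV"
proof -
  obtain r c where r: "r > 0" and
    hs: "\<forall>y\<in>ball p r. ((\<lambda>\<alpha>. c \<alpha> * (\<Prod>i\<in>UNIV. (y $ i - p $ i) ^ (\<alpha> i))) has_sum f y) UNIV"
    using assms unfolding real_analytic_def by blast
  define U where "U \<alpha> = (\<Prod>i\<in>UNIV. (u $ i) ^ (\<alpha> i))" for \<alpha> :: "'i \<Rightarrow> nat"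
  define Ak where "Ak k = {\<alpha> :: 'i \<Rightarrow> nat. deg \<alpha> = k}" for k
  define a where "a k = (\<Sum>\<alpha>\<in>Ak k. c \<alpha> * U \<alpha>)" for k
  define \<rho> where "\<rho> = r / (norm u + 1)"
  have nu: "norm u + 1 > 0" by (metis add_pos_nonneg norm_ge_zero zero_less_one add.commute)
  have \<rho>: "\<rho> > 0" unfolding \<rho>_def using r nu by simp
  have "((\<lambda>k. a k * \<sigma>^k) has_sum f (p + \<sigma> *\<^sub>R u)) UNIV" if s: "\<bar>\<sigma>\<bar> < \<rho>" for \<sigma>
  proof -
    let ?y = "p + \<sigma> *\<^sub>R u"
    have "norm (\<sigma> *\<^sub>R u) < r"
    proof -
      have "norm (\<sigma> *\<^sub>R u) = \<bar>\<sigma>\<bar> * norm u" by simp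
      also have "\<dots> \<le> \<bar>\<sigma>\<bar> * (norm u + 1)" by (simp add: mult_left_mono)
      also have "\<dots> < \<rho> * (norm u + 1)" using s nu by (simp add: mult_strict_right_mono)
      also have "\<dots> = r" unfolding \<rho>_def using nu by simp
      finally show ?thesis .
    qed
    then have "?y \<in> ball p r" by (simp add: dist_norm)
    then have h1: "((\<lambda>\<alpha>. c \<alpha> * (\<Prod>i\<in>UNIV. (?y $ i - p $ i) ^ (\<alpha> i))) has_sum f ?y) UNIV" using hs by blast
    define h where "h \<alpha> = (c \<alpha> * U \<alpha>) * \<sigma> ^ deg \<alpha>" for \<alpha>
    have "c \<alpha> * (\<Prod>i\<in>UNIV. (?y $ i - p $ i) ^ (\<alpha> i)) = h \<alpha>" for \<alpha>
    proof -
      have "(\<Prod>i\<in>UNIV. (?y $ i - p $ i) ^ (\<alpha> i)) = (\<Prod>i\<in>UNIV. (\<sigma> * u $ i) ^ (\<alpha> i))" by simp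
      also have "\<dots> = \<sigma> ^ deg \<alpha> * U \<alpha>" unfolding U_def by (rule prod_pow_deg)
      finally show ?thesis unfolding h_def by simp
    qed
    with h1 have h2: "(h has_sum f ?y) UNIV" by simp
    define F where "F x = h (snd x)" for x :: "nat \<times> ('i \<Rightarrow> nat)"
    have bij: "bij_betw (\<lambda>\<alpha>. (deg \<alpha>, \<alpha>)) UNIV (Sigma UNIV Ak)"
      unfolding Ak_def by (rule bij_betwI[where g = snd]) auto
    have "((\<lambda>\<alpha>. F (deg \<alpha>, \<alpha>)) has_sum f ?y) UNIV" unfolding F_def using h2 by simp
    then have h3: "(F has_sum f ?y) (Sigma UNIV Ak)" using has_sum_reindex_bij_betw[OF bij] by blast
    show ?thesis
    proof (rule has_sum_Sigma'[OF h3])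
      fix k :: nat
      have "((\<lambda>\<alpha>. F (k, \<alpha>)) has_sum (\<Sum>\<alpha>\<in>Ak k. F (k, \<alpha>))) (Ak k)"
        by (rule has_sum_finite) (simp add: Ak_def finite_deg)
      moreover have "(\<Sum>\<alpha>\<in>Ak k. F (k, \<alpha>)) = a k * \<sigma>^k"
        unfolding a_def sum_distrib_right F_def h_def by (rule sum.cong) (auto simp: Ak_def)
      ultimately show "((\<lambda>\<alpha>. F (k, \<alpha>)) has_sum a k * \<sigma>^k) (Ak k)" by simp
    qed
  qed
  then show ?thesis using \<rho> by blast
qed

lemma analytic_identity:
  fixes f :: "real^'i \<Rightarrow> real"
  assumes an: "real_analytic f" and V: "open V" "x0 \<in> V" and z: "\<forall>x\<in>V. f x = 0"
  shows "f y = 0"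
proof -
  define u where "u = y - x0"
  define \<psi> where "\<psi> s = f (x0 + s *\<^sub>R u)" for s
  have loc: "\<forall>s. \<exists>\<rho>>0. \<exists>a. \<forall>\<sigma>. \<bar>\<sigma>\<bar> < \<rho> \<longrightarrow> ((\<lambda>k. a k * \<sigma>^k) has_sum \<psi> (s + \<sigma>)) UNIV"
  proof
    fix s
    obtain \<rho> a where "\<rho> > 0" "\<forall>\<sigma>. \<bar>\<sigma>\<bar> < \<rho> \<longrightarrow> ((\<lambda>k. a k * \<sigma>^k) has_sum f ((x0 + s *\<^sub>R u) + \<sigma> *\<^sub>R u)) UNIV"
      using analytic_line[OF an] by blast
    moreover have "(x0 + s *\<^sub>R u) + \<sigma> *\<^sub>R u = x0 + (s + \<sigma>) *\<^sub>R u" for \<sigma>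
      by (simp add: scaleR_add_left algebra_simps)
    ultimately show "\<exists>\<rho>>0. \<exists>a. \<forall>\<sigma>. \<bar>\<sigma>\<bar> < \<rho> \<longrightarrow> ((\<lambda>k. a k * \<sigma>^k) has_sum \<psi> (s + \<sigma>)) UNIV"
      unfolding \<psi>_def by metis
  qed
  obtain \<epsilon> where \<epsilon>: "\<epsilon> > 0" "ball x0 \<epsilon> \<subseteq> V" using V open_contains_ball by blast
  have nu: "norm u + 1 > 0" by (metis add_pos_nonneg norm_ge_zero zero_less_one add.commute)
  define e where "e = \<epsilon> / (norm u + 1)"
  have e: "e > 0" unfolding e_def using \<epsilon> nu by simp
  have "\<psi> s = 0" if s: "\<bar>s\<bar> < e" for s
  proof -
    have "norm (s *\<^sub>R u) < \<epsilon>"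
    proof -
      have "norm (s *\<^sub>R u) = \<bar>s\<bar> * norm u" by simp
      also have "\<dots> \<le> \<bar>s\<bar> * (norm u + 1)" by (simp add: mult_left_mono)
      also have "\<dots> < e * (norm u + 1)" using s nu by (simp add: mult_strict_right_mono)
      also have "\<dots> = \<epsilon>" unfolding e_def using nu by simp
      finally show ?thesis .
    qed
    then have "x0 + s *\<^sub>R u \<in> V" using \<epsilon> by (auto simp: dist_norm)
    then show ?thesis unfolding \<psi>_def using z by blast
  qed
  then have "\<psi> 1 = 0" using real_analytic_1d_identity[OF loc e] by blast
  then show ?thesis unfolding \<psi>_def u_def by simp
qed

lemma pow_le_frac:
  fixes d \<rho> :: real
  assumes "0 \<le> d" "d \<le> \<rho>" "\<rho> > 0" "k \<ge> 1"
  shows "d ^ k \<le> (d / \<rho>) * \<rho> ^ k"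
proof -
  have q: "0 \<le> d / \<rho>" "d / \<rho> \<le> 1" using assms by auto
  have "d ^ k = (d / \<rho>) ^ k * \<rho> ^ k" using assms(3) by (simp add: power_divide)
  also have "(d / \<rho>) ^ k = (d / \<rho>) * (d / \<rho>) ^ (k - 1)" using assms(4)
    by (metis Suc_diff_le diff_Suc_1 power_Suc)
  also have "\<dots> \<le> (d / \<rho>) * 1" using q by (intro mult_left_mono power_le_one) auto
  finally show ?thesis using q assms(3) by (simp add: mult_right_mono)
qed

lemma deg_pos: "\<alpha> \<noteq> (\<lambda>_. 0) \<Longrightarrow> deg \<alpha> \<ge> 1"
proof -
  assume "\<alpha> \<noteq> (\<lambda>_. 0)"
  then obtain i where "\<alpha> i \<noteq> 0" by auto
  then show ?thesis unfolding deg_def using member_le_sum[of i UNIV \<alpha>] by simp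
qed

lemma analytic_cont:
  fixes f :: "real^'i \<Rightarrow> real"
  assumes "real_analytic f"
  shows "continuous (at x) f"
proof -
  obtain r c where r: "r > 0" and
    hs: "\<forall>y\<in>ball x r. ((\<lambda>\<alpha>. c \<alpha> * (\<Prod>i\<in>UNIV. (y $ i - x $ i) ^ (\<alpha> i))) has_sum f y) UNIV"
    using assms unfolding real_analytic_def by blast
  define n where "n = real CARD('i)"
  have n: "n \<ge> 1" unfolding n_def by simp
  define \<rho> where "\<rho> = r / (n + 1)"
  have \<rho>: "\<rho> > 0" unfolding \<rho>_def using r n by simp
  have \<rho>r: "\<rho> < r" unfolding \<rho>_def using r n by (simp add: divide_less_eq)
  define ys where "ys = x + (\<chi> i. \<rho>)"
  have "norm ((\<chi> i. \<rho>) :: real^'i) \<le> (\<Sum>i\<in>UNIV. \<bar>((\<chi> i. \<rho>) :: real^'i) $ i\<bar>)" by (rule norm_le_l1_cart)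
  also have "\<dots> = n * \<rho>" unfolding n_def using \<rho> by simp
  also have "\<dots> < r" unfolding \<rho>_def using r n by (simp add: field_simps)
  finally have "ys \<in> ball x r" unfolding ys_def by (simp add: dist_norm)
  then have "((\<lambda>\<alpha>. c \<alpha> * (\<Prod>i\<in>UNIV. (ys $ i - x $ i) ^ (\<alpha> i))) has_sum f ys) UNIV" using hs by blast
  moreover have "(\<Prod>i\<in>UNIV. (ys $ i - x $ i) ^ (\<alpha> i)) = \<rho> ^ deg \<alpha>" for \<alpha>
    unfolding ys_def deg_def by (simp add: power_sum)
  ultimately have "((\<lambda>\<alpha>. c \<alpha> * \<rho> ^ deg \<alpha>) has_sum f ys) UNIV" by simp
  then have "(\<lambda>\<alpha>. c \<alpha> * \<rho> ^ deg \<alpha>) summable_on UNIV" by (rule has_sum_imp_summable)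
  then have "(\<lambda>\<alpha>. norm (c \<alpha> * \<rho> ^ deg \<alpha>)) summable_on UNIV"
    by (rule summable_on_iff_abs_summable_on_real[THEN iffD1])
  then obtain B where B: "((\<lambda>\<alpha>. norm (c \<alpha> * \<rho> ^ deg \<alpha>)) has_sum B) UNIV"
    using has_sum_infsum by blast
  have B0: "B \<ge> 0" using has_sum_nonneg[OF B] by simp
  have hx: "((\<lambda>\<alpha>. c \<alpha> * (\<Prod>i\<in>UNIV. (x $ i - x $ i) ^ (\<alpha> i))) has_sum f x) UNIV"
    using bspec[OF hs, of x] r by simp
  have bound: "\<bar>f y - f x\<bar> \<le> (norm (y - x) / \<rho>) * B" if y: "norm (y - x) < \<rho>" for y
  proof -
    define d where "d = norm (y - x)"
    have "y \<in> ball x r" using y \<rho>r by (simp add: dist_norm norm_minus_commute)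
    then have hy: "((\<lambda>\<alpha>. c \<alpha> * (\<Prod>i\<in>UNIV. (y $ i - x $ i) ^ (\<alpha> i))) has_sum f y) UNIV" using hs by blast
    have "((\<lambda>\<alpha>. - (c \<alpha> * (\<Prod>i\<in>UNIV. (x $ i - x $ i) ^ (\<alpha> i)))) has_sum - f x) UNIV"
      using hx has_sum_uminus by (metis minus_minus)
    from has_sum_add[OF hy this]
    have hd: "((\<lambda>\<alpha>. c \<alpha> * (\<Prod>i\<in>UNIV. (y $ i - x $ i) ^ (\<alpha> i)) - c \<alpha> * (\<Prod>i\<in>UNIV. (x $ i - x $ i) ^ (\<alpha> i))) has_sum (f y - f x)) UNIV"
      by simp
    have hb: "((\<lambda>\<alpha>. (d / \<rho>) * norm (c \<alpha> * \<rho> ^ deg \<alpha>)) has_sum ((d / \<rho>) * B)) UNIV"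
      by (rule has_sum_cmult_right[OF B])
    have pt: "norm (c \<alpha> * (\<Prod>i\<in>UNIV. (y $ i - x $ i) ^ (\<alpha> i)) - c \<alpha> * (\<Prod>i\<in>UNIV. (x $ i - x $ i) ^ (\<alpha> i)))
            \<le> d / \<rho> * norm (c \<alpha> * \<rho> ^ deg \<alpha>)" for \<alpha>
    proof (cases "\<alpha> = (\<lambda>_. 0)")
      case True
      then show ?thesis using \<rho> by (simp add: d_def)
    next
      case False
      then obtain j where j: "\<alpha> j \<noteq> 0" by auto
      have z0: "(\<Prod>i\<in>UNIV. (x $ i - x $ i) ^ (\<alpha> i)) = 0"
        using j by (intro prod_zero[of UNIV]) auto
      then have "\<bar>c \<alpha> * (\<Prod>i\<in>UNIV. (y $ i - x $ i) ^ (\<alpha> i)) - c \<alpha> * (\<Prod>i\<in>UNIV. (x $ i - x $ i) ^ (\<alpha> i))\<bar>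
           = \<bar>c \<alpha>\<bar> * (\<Prod>i\<in>UNIV. \<bar>y $ i - x $ i\<bar> ^ (\<alpha> i))"
        by (simp only: z0 mult_zero_right diff_zero abs_mult abs_prod power_abs)
      also have "\<dots> \<le> \<bar>c \<alpha>\<bar> * (\<Prod>i\<in>UNIV. d ^ (\<alpha> i))"
      proof (intro mult_left_mono prod_mono conjI)
        fix i
        have "\<bar>y $ i - x $ i\<bar> \<le> d" unfolding d_def using component_le_norm_cart[of "y - x" i] by simp
        then show "\<bar>y $ i - x $ i\<bar> ^ (\<alpha> i) \<le> d ^ (\<alpha> i)" by (intro power_mono) auto
      qed auto
      also have "(\<Prod>i\<in>UNIV. d ^ (\<alpha> i)) = d ^ deg \<alpha>" unfolding deg_def by (simp add: power_sum)
      also have "\<bar>c \<alpha>\<bar> * d ^ deg \<alpha> \<le> \<bar>c \<alpha>\<bar> * ((d / \<rho>) * \<rho> ^ deg \<alpha>)"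
        using pow_le_frac[of d \<rho> "deg \<alpha>"] deg_pos[OF False] y \<rho> unfolding d_def
        by (intro mult_left_mono) auto
      also have "\<dots> = d / \<rho> * norm (c \<alpha> * \<rho> ^ deg \<alpha>)" using \<rho> by (simp add: abs_mult)
      finally show ?thesis by simp
    qed
    have "norm (f y - f x) \<le> d / \<rho> * B" using norm_infsum_le[OF hd hb] pt by blast
    then show ?thesis unfolding d_def by simp
  qed
  show ?thesis unfolding continuous_at_eps_delta
  proof (intro allI impI)
    fix \<epsilon> :: real assume \<epsilon>: "\<epsilon> > 0"
    define \<delta> where "\<delta> = min \<rho> (\<epsilon> * \<rho> / (B + 1))"
    have \<delta>: "\<delta> > 0" unfolding \<delta>_def using \<rho> \<epsilon> B0 by simp
    have "dist (f y) (f x) < \<epsilon>" if "dist y x < \<delta>" for y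
    proof -
      have d1: "norm (y - x) < \<rho>" "norm (y - x) < \<epsilon> * \<rho> / (B + 1)" using that unfolding \<delta>_def by (auto simp: dist_norm)
      have "\<bar>f y - f x\<bar> \<le> (norm (y - x) / \<rho>) * B" using bound[OF d1(1)] .
      also have "\<dots> \<le> (norm (y - x) / \<rho>) * (B + 1)" using \<rho> by (intro mult_left_mono) auto
      also have "\<dots> < \<epsilon>" using d1(2) \<rho> B0 by (simp add: field_simps)
      finally show ?thesis by (simp add: dist_real_def)
    qed
    then show "\<exists>\<delta>>0. \<forall>y. dist y x < \<delta> \<longrightarrow> dist (f y) (f x) < \<epsilon>" using \<delta> by blast
  qed
qed

lemma real_analytic_diff:
  fixes f g :: "real^'i \<Rightarrow> real"
  assumes "real_analytic f" "real_analytic g"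
  shows "real_analytic (\<lambda>x. f x - g x)"
  unfolding real_analytic_def
proof
  fix x
  obtain r1 c1 where r1: "r1 > 0" "\<forall>y\<in>ball x r1. ((\<lambda>\<alpha>. c1 \<alpha> * (\<Prod>i\<in>UNIV. (y $ i - x $ i) ^ (\<alpha> i))) has_sum f y) UNIV"
    using assms(1) unfolding real_analytic_def by blast
  obtain r2 c2 where r2: "r2 > 0" "\<forall>y\<in>ball x r2. ((\<lambda>\<alpha>. c2 \<alpha> * (\<Prod>i\<in>UNIV. (y $ i - x $ i) ^ (\<alpha> i))) has_sum g y) UNIV"
    using assms(2) unfolding real_analytic_def by blast
  have "\<forall>y\<in>ball x (min r1 r2). ((\<lambda>\<alpha>. (c1 \<alpha> - c2 \<alpha>) * (\<Prod>i\<in>UNIV. (y $ i - x $ i) ^ (\<alpha> i))) has_sum (f y - g y)) UNIV"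
  proof
    fix y assume "y \<in> ball x (min r1 r2)"
    then have y: "y \<in> ball x r1" "y \<in> ball x r2" by auto
    have "((\<lambda>\<alpha>. - (c2 \<alpha> * (\<Prod>i\<in>UNIV. (y $ i - x $ i) ^ (\<alpha> i)))) has_sum - g y) UNIV"
      using bspec[OF r2(2) y(2)] has_sum_uminus by (metis minus_minus)
    from has_sum_add[OF bspec[OF r1(2) y(1)] this]
    show "((\<lambda>\<alpha>. (c1 \<alpha> - c2 \<alpha>) * (\<Prod>i\<in>UNIV. (y $ i - x $ i) ^ (\<alpha> i))) has_sum (f y - g y)) UNIV"
      by (simp add: left_diff_distrib)
  qed
  then show "\<exists>r>0. \<exists>c. \<forall>y\<in>ball x r. ((\<lambda>\<alpha>. c \<alpha> * (\<Prod>i\<in>UNIV. (y $ i - x $ i) ^ (\<alpha> i))) has_sum (f y - g y)) UNIV"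
    using r1(1) r2(1) by (intro exI[of _ "min r1 r2"] conjI) auto
qed

lemma shrink_gen:
  fixes \<phi> :: "'k \<Rightarrow> real^'i \<Rightarrow> real"
  assumes "finite P"
  shows "(\<forall>p\<in>P. real_analytic (\<phi> p) \<and> (\<exists>x. \<phi> p x \<noteq> 0)) \<Longrightarrow> open V \<Longrightarrow> V \<noteq> {} \<Longrightarrow>
    \<exists>V'. open V' \<and> V' \<noteq> {} \<and> V' \<subseteq> V \<and> (\<forall>x\<in>V'. \<forall>p\<in>P. \<phi> p x \<noteq> 0)"
  using assms
proof (induction P rule: finite_induct)
  case empty then show ?case by blast
next
  case (insert p P)
  obtain V1 where V1: "open V1" "V1 \<noteq> {}" "V1 \<subseteq> V" "\<forall>x\<in>V1. \<forall>q\<in>P. \<phi> q x \<noteq> 0"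
    using insert by (metis insert_iff)
  have an: "real_analytic (\<phi> p)" and nz: "\<exists>x. \<phi> p x \<noteq> 0" using insert.prems by auto
  have "\<exists>x1\<in>V1. \<phi> p x1 \<noteq> 0"
  proof (rule ccontr)
    assume "\<not> ?thesis"
    then have z: "\<forall>x\<in>V1. \<phi> p x = 0" by blast
    obtain x0 where "x0 \<in> V1" using V1(2) by blast
    have "\<phi> p y = 0" for y by (rule analytic_identity[OF an V1(1) \<open>x0 \<in> V1\<close> z])
    then show False using nz by blast
  qed
  then obtain x1 where x1: "x1 \<in> V1" "\<phi> p x1 \<noteq> 0" by blast
  have "continuous_on UNIV (\<phi> p)" using analytic_cont[OF an] by (simp add: continuous_at_imp_continuous_on)
  then have op: "open {x. \<phi> p x \<noteq> 0}" by (rule open_Collect_neq) simp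
  show ?case
    by (rule exI[of _ "V1 \<inter> {x. \<phi> p x \<noteq> 0}"]) (use V1 op x1 in auto)
qed

lemma shrink_params:
  fixes mf :: "real^'n \<Rightarrow> 'b \<Rightarrow> real^'m" and Sf :: "real^'n \<Rightarrow> 'b \<Rightarrow> real^'m^'m"
  assumes an: "\<forall>\<beta>. analytic_vec (\<lambda>x. mf x \<beta>) \<and> analytic_mat (\<lambda>x. Sf x \<beta>)"
    and sep: "\<forall>\<beta> \<beta>'. \<beta> \<noteq> \<beta>' \<longrightarrow> (\<exists>x. mf x \<beta> \<noteq> mf x \<beta>' \<or> Sf x \<beta> \<noteq> Sf x \<beta>')"
    and fin: "finite B0" and V: "open V" "V \<noteq> {}"
  shows "\<exists>V'. open V' \<and> V' \<noteq> {} \<and> V' \<subseteq> V \<and>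
    (\<forall>x\<in>V'. \<forall>\<beta>\<in>B0. \<forall>\<beta>'\<in>B0. \<beta> \<noteq> \<beta>' \<longrightarrow> (mf x \<beta>, Sf x \<beta>) \<noteq> (mf x \<beta>', Sf x \<beta>'))"
proof -
  define P where "P = {(\<beta>, \<beta>'). \<beta> \<in> B0 \<and> \<beta>' \<in> B0 \<and> \<beta> \<noteq> \<beta>'}"
  have "P \<subseteq> B0 \<times> B0" unfolding P_def by auto
  then have finP: "finite P" using fin finite_subset by blast
  define Cd where "Cd p = {(\<lambda>x. mf x (fst p) $ j - mf x (snd p) $ j) | j. True} \<union>
      {(\<lambda>x. Sf x (fst p) $ k $ j - Sf x (snd p) $ k $ j) | k j. True}" for p
  have Cd_an: "real_analytic g" if "g \<in> Cd p" for g p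
    using that an unfolding Cd_def analytic_vec_def analytic_mat_def
    by (auto intro!: real_analytic_diff)
  have Cd_ne: "mf x (fst p) \<noteq> mf x (snd p) \<or> Sf x (fst p) \<noteq> Sf x (snd p)" if "g \<in> Cd p" "g x \<noteq> 0" for g p x
    using that unfolding Cd_def by auto
  have Cd_ex: "\<exists>g. g \<in> Cd p \<and> (\<exists>x. g x \<noteq> 0)" if pP: "p \<in> P" for p
  proof -
    obtain x where x: "mf x (fst p) \<noteq> mf x (snd p) \<or> Sf x (fst p) \<noteq> Sf x (snd p)"
    proof -
      have "fst p \<noteq> snd p" using pP unfolding P_def by auto
      then show "(\<And>x. mf x (fst p) \<noteq> mf x (snd p) \<or> Sf x (fst p) \<noteq> Sf x (snd p) \<Longrightarrow> thesis) \<Longrightarrow> thesis"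
        using sep by blast
    qed
    then show ?thesis
    proof
      assume "mf x (fst p) \<noteq> mf x (snd p)"
      then obtain j where "mf x (fst p) $ j \<noteq> mf x (snd p) $ j" by (auto simp: vec_eq_iff)
      then show ?thesis unfolding Cd_def
        by (intro exI[of _ "\<lambda>x. mf x (fst p) $ j - mf x (snd p) $ j"]) auto
    next
      assume "Sf x (fst p) \<noteq> Sf x (snd p)"
      then obtain k j where "Sf x (fst p) $ k $ j \<noteq> Sf x (snd p) $ k $ j" by (auto simp: vec_eq_iff)
      then show ?thesis unfolding Cd_def
        by (intro exI[of _ "\<lambda>x. Sf x (fst p) $ k $ j - Sf x (snd p) $ k $ j"]) auto
    qed
  qed
  define \<phi> where "\<phi> p = (SOME g. g \<in> Cd p \<and> (\<exists>x. g x \<noteq> 0))" for p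
  have \<phi>: "\<phi> p \<in> Cd p \<and> (\<exists>x. \<phi> p x \<noteq> 0)" if "p \<in> P" for p
    unfolding \<phi>_def using someI_ex[OF Cd_ex[OF that]] .
  have "\<forall>p\<in>P. real_analytic (\<phi> p) \<and> (\<exists>x. \<phi> p x \<noteq> 0)" using \<phi> Cd_an by blast
  from shrink_gen[OF finP this V] obtain V' where V': "open V'" "V' \<noteq> {}" "V' \<subseteq> V" "\<forall>x\<in>V'. \<forall>p\<in>P. \<phi> p x \<noteq> 0"
    by blast
  have "\<forall>x\<in>V'. \<forall>\<beta>\<in>B0. \<forall>\<beta>'\<in>B0. \<beta> \<noteq> \<beta>' \<longrightarrow> (mf x \<beta>, Sf x \<beta>) \<noteq> (mf x \<beta>', Sf x \<beta>')"
  proof (intro ballI impI)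
    fix x \<beta> \<beta>' assume "x \<in> V'" "\<beta> \<in> B0" "\<beta>' \<in> B0" "\<beta> \<noteq> \<beta>'"
    then have p: "(\<beta>, \<beta>') \<in> P" unfolding P_def by simp
    have "\<phi> (\<beta>,\<beta>') x \<noteq> 0" using V'(4) \<open>x \<in> V'\<close> p by blast
    from Cd_ne[OF conjunct1[OF \<phi>[OF p]] this]
    show "(mf x \<beta>, Sf x \<beta>) \<noteq> (mf x \<beta>', Sf x \<beta>')" by auto
  qed
  with V' show ?thesis by blast
qed

lemma gauss_indep_grouped:
  fixes p :: "'k \<Rightarrow> (real^'n) \<times> (real^'n^'n)"
  assumes fin: "finite I" and pd: "\<forall>i\<in>I. posdef (snd (p i))" and W: "open W" "y0 \<in> W"
    and z: "\<forall>y\<in>W. (\<Sum>i\<in>I. e i * gauss (fst (p i)) (snd (p i)) y) = 0"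
  shows "\<forall>i\<in>I. (\<Sum>j\<in>{j\<in>I. p j = p i}. e j) = 0"
proof -
  define E where "E q = (\<Sum>j\<in>{j\<in>I. p j = q}. e j)" for q
  have "\<forall>q\<in>p ` I. E q = 0"
  proof (rule gauss_indep[OF _ _ W])
    show "finite (p ` I)" using fin by simp
    show "\<forall>q\<in>p ` I. posdef (snd q)" using pd by auto
    show "\<forall>y\<in>W. (\<Sum>q\<in>p ` I. E q * gauss (fst q) (snd q) y) = 0"
    proof
      fix y assume "y \<in> W"
      have "(\<Sum>i\<in>I. e i * gauss (fst (p i)) (snd (p i)) y)
          = (\<Sum>q\<in>p ` I. (\<Sum>i\<in>{x. x \<in> I \<and> p x = q}. e i * gauss (fst (p i)) (snd (p i)) y))"
        by (rule sum.image_gen[OF fin])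
      also have "\<dots> = (\<Sum>q\<in>p ` I. E q * gauss (fst q) (snd q) y)"
        unfolding E_def sum_distrib_right by (rule sum.cong[OF refl], rule sum.cong) auto
      finally show "(\<Sum>q\<in>p ` I. E q * gauss (fst q) (snd q) y) = 0" using z \<open>y \<in> W\<close> by simp
    qed
  qed
  then show ?thesis unfolding E_def by auto
qed

definition Fn where
  "Fn mu S1 mf Sf lagidx M n \<alpha> \<beta> z =
     gauss (mu \<alpha>) (S1 \<alpha>) (init_vec lagidx z) *
     (\<Prod>t\<in>{M+1..n}. gauss (mf (lag_vec lagidx z t) (\<beta> t)) (Sf (lag_vec lagidx z t) (\<beta> t)) (z t))"

lemma lag_facts:
  assumes "bij_betw lagidx UNIV {1..M}"
  shows "inj lagidx" "\<And>l. 1 \<le> lagidx l" "\<And>l. lagidx l \<le> M" "\<And>t. t \<in> {1..M} \<Longrightarrow> \<exists>l. lagidx l = t"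
proof -
  have r: "range lagidx = {1..M}" and i: "inj lagidx" using assms unfolding bij_betw_def by auto
  show "inj lagidx" by (rule i)
  show "\<And>l. 1 \<le> lagidx l" "\<And>l. lagidx l \<le> M" using r by (metis atLeastAtMost_iff rangeI)+
  show "\<And>t. t \<in> {1..M} \<Longrightarrow> \<exists>l. lagidx l = t" using r by (metis imageE)
qed

lemma Fn_local:
  assumes lag: "bij_betw lagidx UNIV {1..M}" and Mn: "M \<le> n"
    and eqz: "\<forall>t. 1 \<le> t \<and> t \<le> n \<longrightarrow> z t = z' t"
  shows "Fn mu S1 mf Sf lagidx M n \<alpha> \<beta> z = Fn mu S1 mf Sf lagidx M n \<alpha> \<beta> z'"
proof -
  note lf = lag_facts[OF lag]
  have "z (lagidx l) = z' (lagidx l)" for l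
    using eqz lf(2)[of l] lf(3)[of l] Mn by auto
  then have "init_vec lagidx z = init_vec lagidx z'"
    unfolding init_vec_def by simp
  moreover have "lag_vec lagidx z t = lag_vec lagidx z' t" if "t \<in> {M+1..n}" for t
  proof -
    have "z (t - lagidx l) = z' (t - lagidx l)" for l
    proof -
      have "1 \<le> t - lagidx l \<and> t - lagidx l \<le> n" using lf(2)[of l] lf(3)[of l] that by auto
      then show ?thesis using eqz by blast
    qed
    then show ?thesis unfolding lag_vec_def by simp
  qed
  moreover have "z t = z' t" if "t \<in> {M+1..n}" for t using eqz that by auto
  ultimately show ?thesis unfolding Fn_def by (intro arg_cong2[where f = "(*)"] prod.cong) auto
qed

lemma Fn_Suc:
  assumes "M \<le> n"
  shows "Fn mu S1 mf Sf lagidx M (Suc n) \<alpha> \<beta> z = Fn mu S1 mf Sf lagidx M n \<alpha> \<beta> z *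
     gauss (mf (lag_vec lagidx z (Suc n)) (\<beta> (Suc n))) (Sf (lag_vec lagidx z (Suc n)) (\<beta> (Suc n))) (z (Suc n))"
  using assms unfolding Fn_def by (simp add: mult.assoc)

lemma box_open:
  fixes U :: "'l::finite \<Rightarrow> (real^'m) set"
  assumes "\<forall>l. open (U l)"
  shows "open {x :: real^('m \<times> 'l). \<forall>l. (\<chi> j. x $ (j, l)) \<in> U l}"
proof -
  have "{x :: real^('m \<times> 'l). \<forall>l. (\<chi> j. x $ (j, l)) \<in> U l} = (\<Inter>l. (\<lambda>x :: real^('m \<times> 'l). \<chi> j. x $ (j, l)) -` U l)"
    by auto
  moreover have "open ((\<lambda>x :: real^('m \<times> 'l). \<chi> j. x $ (j, l)) -` U l)" for l
    by (rule open_vimage[OF assms[rule_format]]) (intro continuous_intros)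
  ultimately show ?thesis by (simp add: open_INT)
qed

lemma box_ne:
  fixes U :: "'l::finite \<Rightarrow> (real^'m) set"
  assumes "\<forall>l. U l \<noteq> {}"
  shows "{x :: real^('m \<times> 'l). \<forall>l. (\<chi> j. x $ (j, l)) \<in> U l} \<noteq> {}"
proof -
  have "\<forall>l. \<exists>v. v \<in> U l" using assms by blast
  from choice[OF this] obtain u where u: "\<forall>l. u l \<in> U l" by blast
  have "(\<chi> j. ((\<chi> p. u (snd p) $ fst p) :: real^('m \<times> 'l)) $ (j, l)) = u l" for l by (simp add: vec_eq_iff)
  then have "((\<chi> p. u (snd p) $ fst p) :: real^('m \<times> 'l)) \<in> {x :: real^('m \<times> 'l). \<forall>l. (\<chi> j. x $ (j, l)) \<in> U l}"
    using u by simp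
  then show ?thesis by blast
qed

lemma box_ball:
  fixes x x0 :: "real^('m::finite \<times> 'l::finite)"
  assumes e: "\<epsilon> > 0" and d: "\<forall>l. dist (\<chi> j. x $ (j, l)) (\<chi> j. x0 $ (j, l)) < \<epsilon> / real CARD('m \<times> 'l)"
  shows "dist x x0 < \<epsilon>"
proof -
  have c: "\<bar>x $ p - x0 $ p\<bar> < \<epsilon> / real CARD('m \<times> 'l)" for p
  proof -
    obtain j l where p: "p = (j, l)" by (cases p)
    have "\<bar>x $ p - x0 $ p\<bar> = \<bar>((\<chi> j. x $ (j, l)) - (\<chi> j. x0 $ (j, l))) $ j\<bar>" using p by simp
    also have "\<dots> \<le> norm ((\<chi> j. x $ (j, l)) - (\<chi> j. x0 $ (j, l)))" by (rule component_le_norm_cart)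
    also have "\<dots> < \<epsilon> / real CARD('m \<times> 'l)" using d by (simp add: dist_norm)
    finally show ?thesis .
  qed
  have "dist x x0 = norm (x - x0)" by (simp add: dist_norm)
  also have "\<dots> \<le> (\<Sum>p\<in>UNIV. \<bar>(x - x0) $ p\<bar>)" by (rule norm_le_l1_cart)
  also have "\<dots> < (\<Sum>p\<in>(UNIV :: ('m \<times> 'l) set). \<epsilon> / real CARD('m \<times> 'l))"
    using c by (intro sum_strict_mono) auto
  also have "\<dots> = \<epsilon>" by simp
  finally show ?thesis .
qed

lemma main_ind:
  fixes mu :: "'a \<Rightarrow> real^('m::finite \<times> 'l::finite)" and S1 :: "'a \<Rightarrow> real^('m \<times> 'l)^('m \<times> 'l)"
    and mf :: "real^('m \<times> 'l) \<Rightarrow> 'b \<Rightarrow> real^'m" and Sf :: "real^('m \<times> 'l) \<Rightarrow> 'b \<Rightarrow> real^'m^'m"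
    and lagidx :: "'l \<Rightarrow> nat"
  assumes lag: "bij_betw lagidx UNIV {1..M}"
    and S1_pd: "\<forall>\<alpha>. posdef (S1 \<alpha>)" and Sf_pd: "\<forall>x \<beta>. posdef (Sf x \<beta>)"
    and m1_init: "\<forall>\<alpha> \<alpha>'. \<alpha> \<noteq> \<alpha>' \<longleftrightarrow> (mu \<alpha> \<noteq> mu \<alpha>' \<or> S1 \<alpha> \<noteq> S1 \<alpha>')"
    and m2: "\<forall>\<beta>. analytic_vec (\<lambda>x. mf x \<beta>) \<and> analytic_mat (\<lambda>x. Sf x \<beta>)"
    and sep: "\<forall>\<beta> \<beta>'. \<beta> \<noteq> \<beta>' \<longrightarrow> (\<exists>x. mf x \<beta> \<noteq> mf x \<beta>' \<or> Sf x \<beta> \<noteq> Sf x \<beta>')"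
  shows "\<forall>(I :: 'k set) d A Bt U. finite I \<longrightarrow> (\<forall>t. open (U t) \<and> U t \<noteq> {}) \<longrightarrow>
     (\<forall>z. (\<forall>t\<in>{1..M+k}. z t \<in> U t) \<longrightarrow> (\<Sum>i\<in>I. d i * Fn mu S1 mf Sf lagidx M (M+k) (A i) (Bt i) z) = 0) \<longrightarrow>
     (\<forall>i\<in>I. (\<Sum>j\<in>{j\<in>I. A j = A i \<and> (\<forall>t\<in>{M+1..M+k}. Bt j t = Bt i t)}. d j) = 0)"
proof (induction k)
  note lf = lag_facts[OF lag]
  case 0
  show ?case
  proof (intro allI impI ballI)
    fix I :: "'k set" and d A Bt and U :: "nat \<Rightarrow> (real^'m) set" and i
    assume fin: "finite I" and U: "\<forall>t. open (U t) \<and> U t \<noteq> {}"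
      and h: "\<forall>z. (\<forall>t\<in>{1..M+0}. z t \<in> U t) \<longrightarrow> (\<Sum>i\<in>I. d i * Fn mu S1 mf Sf lagidx M (M+0) (A i) (Bt i) z) = 0"
      and i: "i \<in> I"
    define W where "W = {w :: real^('m \<times> 'l). \<forall>l. (\<chi> j. w $ (j,l)) \<in> U (lagidx l)}"
    have Wo: "open W" unfolding W_def using U by (intro box_open) auto
    have Wne: "W \<noteq> {}" unfolding W_def using U by (intro box_ne) auto
    obtain w0 where w0: "w0 \<in> W" using Wne by blast
    have hz: "\<forall>w\<in>W. (\<Sum>i\<in>I. d i * gauss (fst (mu (A i), S1 (A i))) (snd (mu (A i), S1 (A i))) w) = 0"
    proof
      fix w assume wW: "w \<in> W"
      define z where "z t = (\<chi> j. w $ (j, inv lagidx t))" for t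
      have iv: "init_vec lagidx z = w"
        unfolding init_vec_def z_def using lf(1) by (simp add: vec_eq_iff inv_f_f)
      have zU: "\<forall>t\<in>{1..M+0}. z t \<in> U t"
      proof
        fix t assume "t \<in> {1..M+0}"
        then have "t \<in> {1..M}" by simp
        then obtain l where l: "lagidx l = t" using lf(4) by blast
        then have il: "inv lagidx t = l" using inv_f_f[OF lf(1), of l] by simp
        have "(\<chi> j. w $ (j, l)) \<in> U (lagidx l)" using wW unfolding W_def by blast
        then show "z t \<in> U t" unfolding z_def using il l by simp
      qed
      have "(\<Sum>i\<in>I. d i * Fn mu S1 mf Sf lagidx M (M+0) (A i) (Bt i) z) = 0" using h zU by blast
      moreover have "Fn mu S1 mf Sf lagidx M (M+0) \<alpha> \<beta> z = gauss (mu \<alpha>) (S1 \<alpha>) w" for \<alpha> \<beta>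
        unfolding Fn_def iv by simp
      ultimately show "(\<Sum>i\<in>I. d i * gauss (fst (mu (A i), S1 (A i))) (snd (mu (A i), S1 (A i))) w) = 0" by simp
    qed
    have g0: "\<forall>i\<in>I. (\<Sum>j\<in>{j\<in>I. (mu (A j), S1 (A j)) = (mu (A i), S1 (A i))}. d j) = 0"
      by (rule gauss_indep_grouped[OF fin _ Wo w0 hz]) (use S1_pd in simp)
    have s1: "(\<Sum>j\<in>{j\<in>I. (mu (A j), S1 (A j)) = (mu (A i), S1 (A i))}. d j) = 0"
      using bspec[OF g0 i] .
    have seteq: "{j\<in>I. (mu (A j), S1 (A j)) = (mu (A i), S1 (A i))} = {j\<in>I. A j = A i \<and> (\<forall>t\<in>{M+1..M+0}. Bt j t = Bt i t)}"
    proof -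
      have eqA: "(mu (A j), S1 (A j)) = (mu (A i), S1 (A i)) \<longleftrightarrow> A j = A i" for j
        using m1_init[rule_format, of "A j" "A i"] by blast
      show ?thesis using eqA by auto
    qed
    show "(\<Sum>j\<in>{j\<in>I. A j = A i \<and> (\<forall>t\<in>{M+1..M+0}. Bt j t = Bt i t)}. d j) = 0"
      unfolding seteq[symmetric] by (rule s1)
  qed
next
  note lf = lag_facts[OF lag]
  case (Suc k)
  define n where "n = M + k"
  have Mn: "M \<le> n" unfolding n_def by simp
  have Sn: "M + Suc k = Suc n" unfolding n_def by simp
  show ?case
  proof (intro allI impI ballI)
    fix I :: "'k set" and d A Bt and U :: "nat \<Rightarrow> (real^'m) set" and i
    assume fin: "finite I" and U: "\<forall>t. open (U t) \<and> U t \<noteq> {}"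
      and h: "\<forall>z. (\<forall>t\<in>{1..M + Suc k}. z t \<in> U t) \<longrightarrow> (\<Sum>i\<in>I. d i * Fn mu S1 mf Sf lagidx M (M + Suc k) (A i) (Bt i) z) = 0"
      and i: "i \<in> I"
    define L where "L = {x :: real^('m \<times> 'l). \<forall>l. (\<chi> j. x $ (j,l)) \<in> U (Suc n - lagidx l)}"
    have Lo: "open L" unfolding L_def using U by (intro box_open) auto
    have Lne: "L \<noteq> {}" unfolding L_def using U by (intro box_ne) auto
    define BI where "BI = (\<lambda>j. Bt j (Suc n)) ` I"
    have finBI: "finite BI" unfolding BI_def using fin by simp
    have "\<exists>V'. open V' \<and> V' \<noteq> {} \<and> V' \<subseteq> L \<and>
        (\<forall>x\<in>V'. \<forall>\<beta>\<in>BI. \<forall>\<beta>'\<in>BI. \<beta> \<noteq> \<beta>' \<longrightarrow> (mf x \<beta>, Sf x \<beta>) \<noteq> (mf x \<beta>', Sf x \<beta>'))"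
      by (rule shrink_params[OF m2 sep finBI Lo Lne])
    then obtain V' where V'all: "open V' \<and> V' \<noteq> {} \<and> V' \<subseteq> L \<and>
        (\<forall>x\<in>V'. \<forall>\<beta>\<in>BI. \<forall>\<beta>'\<in>BI. \<beta> \<noteq> \<beta>' \<longrightarrow> (mf x \<beta>, Sf x \<beta>) \<noteq> (mf x \<beta>', Sf x \<beta>'))"
      by (rule exE)
    then have V': "open V'" "V' \<noteq> {}" "V' \<subseteq> L"
      and dst: "\<forall>x\<in>V'. \<forall>\<beta>\<in>BI. \<forall>\<beta>'\<in>BI. \<beta> \<noteq> \<beta>' \<longrightarrow> (mf x \<beta>, Sf x \<beta>) \<noteq> (mf x \<beta>', Sf x \<beta>')"
      by simp_all
    obtain x0 where x0: "x0 \<in> V'" using V'(2) by blast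
    obtain \<epsilon> where \<epsilon>: "\<epsilon> > 0" "ball x0 \<epsilon> \<subseteq> V'" using V'(1) x0 open_contains_ball by blast
    define \<epsilon>' where "\<epsilon>' = \<epsilon> / real CARD('m \<times> 'l)"
    have \<epsilon>': "\<epsilon>' > 0" unfolding \<epsilon>'_def using \<epsilon> by simp
    define x0l where "x0l l = (\<chi> j. x0 $ (j,l))" for l
    define U' where "U' t = U t \<inter> (\<Inter>l\<in>{l. t = Suc n - lagidx l}. ball (x0l l) \<epsilon>')" for t
    have uniq: "l = l'" if "Suc n - lagidx l = Suc n - lagidx l'" for l l'
    proof -
      have "lagidx l \<le> Suc n" "lagidx l' \<le> Suc n" using lf(3)[of l] lf(3)[of l'] Mn by auto
      then have "lagidx l = lagidx l'" using that by simp
      then show ?thesis using lf(1) by (simp add: inj_eq)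
    qed
    have x0L: "x0l l \<in> U (Suc n - lagidx l)" for l using x0 V'(3) unfolding L_def x0l_def by blast
    have U': "\<forall>t. open (U' t) \<and> U' t \<noteq> {}"
    proof
      fix t
      have "open (U' t)" unfolding U'_def using U by (intro open_Int open_INT) auto
      moreover have "U' t \<noteq> {}"
      proof (cases "\<exists>l. t = Suc n - lagidx l")
        case True
        then obtain l0 where l0: "t = Suc n - lagidx l0" by blast
        then have "{l. t = Suc n - lagidx l} = {l0}" using uniq by auto
        then have "U' t = U t \<inter> ball (x0l l0) \<epsilon>'" unfolding U'_def by simp
        moreover have "x0l l0 \<in> U t" using x0L l0 by simp
        ultimately show ?thesis using \<epsilon>' by auto
      next
        case False
        then have "U' t = U t" unfolding U'_def by auto
        then show ?thesis using U by simp
      qed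
      ultimately show "open (U' t) \<and> U' t \<noteq> {}" by blast
    qed
    define I' where "I' = {j\<in>I. Bt j (Suc n) = Bt i (Suc n)}"
    have finI': "finite I'" unfolding I'_def using fin by simp
    have iI': "i \<in> I'" unfolding I'_def using i by simp
    have key: "\<forall>z. (\<forall>t\<in>{1..M+k}. z t \<in> U' t) \<longrightarrow> (\<Sum>j\<in>I'. d j * Fn mu S1 mf Sf lagidx M (M+k) (A j) (Bt j) z) = 0"
    proof (intro allI impI)
      fix z assume zU': "\<forall>t\<in>{1..M+k}. z t \<in> U' t"
      define x where "x = lag_vec lagidx z (Suc n)"
      have xl: "(\<chi> j. x $ (j,l)) = z (Suc n - lagidx l)" for l
        unfolding x_def lag_vec_def by (simp add: vec_eq_iff)
      have xV: "x \<in> V'"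
      proof -
        have "dist (\<chi> j. x $ (j,l)) (\<chi> j. x0 $ (j,l)) < \<epsilon>'" for l
        proof -
          let ?t = "Suc n - lagidx l"
          have "?t \<in> {1..M+k}" using lf(2)[of l] lf(3)[of l] Mn unfolding n_def by auto
          then have "z ?t \<in> U' ?t" using zU' by blast
          then have "z ?t \<in> ball (x0l l) \<epsilon>'" unfolding U'_def by blast
          then show ?thesis using xl[of l] unfolding x0l_def by (simp add: dist_commute)
        qed
        then have "dist x x0 < \<epsilon>" using box_ball[OF \<epsilon>(1)] unfolding \<epsilon>'_def by blast
        then show ?thesis using \<epsilon>(2) by (auto simp: dist_commute)
      qed
      define p where "p j = (mf x (Bt j (Suc n)), Sf x (Bt j (Suc n)))" for j
      define e where "e j = d j * Fn mu S1 mf Sf lagidx M n (A j) (Bt j) z" for j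
      obtain y0 where y0: "y0 \<in> U (Suc n)" using U by blast
      have hy: "\<forall>y\<in>U (Suc n). (\<Sum>j\<in>I. e j * gauss (fst (p j)) (snd (p j)) y) = 0"
      proof
        fix y assume y: "y \<in> U (Suc n)"
        define z' where "z' = z(Suc n := y)"
        have "\<forall>t\<in>{1..M + Suc k}. z' t \<in> U t"
        proof
          fix t assume t: "t \<in> {1..M + Suc k}"
          show "z' t \<in> U t"
          proof (cases "t = Suc n")
            case True then show ?thesis using y unfolding z'_def by simp
          next
            case False
            then have "t \<in> {1..M+k}" using t unfolding n_def by auto
            then show ?thesis using zU' False unfolding z'_def U'_def by auto
          qed
        qed
        then have s0: "(\<Sum>j\<in>I. d j * Fn mu S1 mf Sf lagidx M (M + Suc k) (A j) (Bt j) z') = 0" using h by blast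
        have fz: "Fn mu S1 mf Sf lagidx M n \<alpha> \<beta> z' = Fn mu S1 mf Sf lagidx M n \<alpha> \<beta> z" for \<alpha> \<beta>
          by (rule Fn_local[OF lag Mn]) (simp add: z'_def)
        have lz: "lag_vec lagidx z' (Suc n) = x"
        proof -
          have "z' (Suc n - lagidx l) = z (Suc n - lagidx l)" for l
          proof -
            have "Suc n - lagidx l \<noteq> Suc n" using lf(2)[of l] lf(3)[of l] Mn by arith
            then show ?thesis unfolding z'_def by simp
          qed
          then show ?thesis unfolding x_def lag_vec_def by simp
        qed
        have "Fn mu S1 mf Sf lagidx M (M + Suc k) \<alpha> \<beta> z' =
              Fn mu S1 mf Sf lagidx M n \<alpha> \<beta> z * gauss (mf x (\<beta> (Suc n))) (Sf x (\<beta> (Suc n))) y" for \<alpha> \<beta>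
          unfolding Sn Fn_Suc[OF Mn] fz lz by (simp add: z'_def)
        then show "(\<Sum>j\<in>I. e j * gauss (fst (p j)) (snd (p j)) y) = 0"
          using s0 unfolding e_def p_def by (simp add: mult.assoc)
      qed
      have g: "\<forall>j\<in>I. (\<Sum>j'\<in>{j'\<in>I. p j' = p j}. e j') = 0"
        by (rule gauss_indep_grouped[OF fin _ _ y0 hy]) (use Sf_pd U in \<open>simp_all add: p_def\<close>)
      have "{j'\<in>I. p j' = p i} = I'"
      proof -
        have "p j' = p i \<longleftrightarrow> Bt j' (Suc n) = Bt i (Suc n)" if "j' \<in> I" for j'
        proof
          assume "p j' = p i"
          then show "Bt j' (Suc n) = Bt i (Suc n)" using dst xV that i unfolding p_def BI_def by blast
        qed (simp add: p_def)
        then show ?thesis unfolding I'_def by auto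
      qed
      then show "(\<Sum>j\<in>I'. d j * Fn mu S1 mf Sf lagidx M (M+k) (A j) (Bt j) z) = 0"
        using g i unfolding e_def n_def by force
    qed
    have "(\<Sum>j\<in>{j\<in>I'. A j = A i \<and> (\<forall>t\<in>{M+1..M+k}. Bt j t = Bt i t)}. d j) = 0"
    proof -
      have "\<forall>i\<in>I'. (\<Sum>j\<in>{j\<in>I'. A j = A i \<and> (\<forall>t\<in>{M+1..M+k}. Bt j t = Bt i t)}. d j) = 0"
        using Suc.IH[THEN spec[of _ I'], THEN spec[of _ d], THEN spec[of _ A], THEN spec[of _ Bt], THEN spec[of _ U']]
          finI' U' key by blast
      then show ?thesis using iI' by blast
    qed
    moreover have "{j\<in>I'. A j = A i \<and> (\<forall>t\<in>{M+1..M+k}. Bt j t = Bt i t)} =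
                   {j\<in>I. A j = A i \<and> (\<forall>t\<in>{M+1..M + Suc k}. Bt j t = Bt i t)}"
    proof -
      have "{M+1..M + Suc k} = insert (Suc n) {M+1..M+k}" unfolding n_def by auto
      then show ?thesis unfolding I'_def by auto
    qed
    ultimately show "(\<Sum>j\<in>{j\<in>I. A j = A i \<and> (\<forall>t\<in>{M+1..M + Suc k}. Bt j t = Bt i t)}. d j) = 0" by simp
  qed
qed

lemma member_facts:
  assumes "msm_member M T C K0 K c a b" "M < T"
  shows "C = K0 * K ^ (T - M)" "\<forall>i\<in>{1..C}. c i > 0" "C > 0" "K0 > 0" "K > 0"
    "inj_on (\<lambda>i. (a i, restrict (b i) {M+1..T})) {1..C}"
    "card (a ` {1..C}) = K0"
proof -
  obtain A0 B0 where mem: "C = K0 * K ^ (T - M)" "\<forall>i\<in>{1..C}. c i > 0" "(\<Sum>i\<in>{1..C}. c i) = 1"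
    "finite A0" "card A0 = K0" "finite B0" "card B0 = K"
    "\<forall>i\<in>{1..C}. a i \<in> A0 \<and> (\<forall>t\<in>{M+1..T}. b i t \<in> B0)"
    "\<forall>i\<in>{1..C}. \<forall>i'\<in>{1..C}. i \<noteq> i' \<longrightarrow> a i \<noteq> a i' \<or> (\<exists>t\<in>{M+1..T}. b i t \<noteq> b i' t)"
    using assms(1) unfolding msm_member_def by blast
  show "C = K0 * K ^ (T - M)" "\<forall>i\<in>{1..C}. c i > 0" using mem by auto
  have C: "C > 0"
  proof (rule ccontr)
    assume "\<not> C > 0" then have "C = 0" by simp
    then show False using mem(3) by simp
  qed
  then show "C > 0" .
  have KK: "K0 * K ^ (T - M) \<noteq> 0" using C mem(1) by (metis less_irrefl)
  then show "K0 > 0" by simp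
  show "K > 0"
  proof (rule ccontr)
    assume "\<not> K > 0" then have "K = 0" by simp
    then have "K ^ (T - M) = 0" using assms(2) by simp
    then show False using KK by simp
  qed
  define key where "key i = (a i, restrict (b i) {M+1..T})" for i
  have inj: "inj_on key {1..C}"
  proof (rule inj_onI)
    fix i i' assume ii: "i \<in> {1..C}" "i' \<in> {1..C}" "key i = key i'"
    then have aa: "a i = a i'" unfolding key_def by simp
    have bb: "b i t = b i' t" if "t \<in> {M+1..T}" for t
    proof -
      have "restrict (b i) {M+1..T} t = restrict (b i') {M+1..T} t" using ii(3) unfolding key_def by simp
      then show ?thesis using that by simp
    qed
    show "i = i'"
    proof (rule ccontr)
      assume "i \<noteq> i'"
      then have "a i \<noteq> a i' \<or> (\<exists>t\<in>{M+1..T}. b i t \<noteq> b i' t)" using mem(9) ii(1,2) by blast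
      then show False using aa bb by blast
    qed
  qed
  then show "inj_on (\<lambda>i. (a i, restrict (b i) {M+1..T})) {1..C}" unfolding key_def .
  have sub: "key ` {1..C} \<subseteq> A0 \<times> Pi\<^sub>E {M+1..T} (\<lambda>_. B0)" using mem(8) unfolding key_def by auto
  have "card (A0 \<times> Pi\<^sub>E {M+1..T} (\<lambda>_. B0)) = K0 * K ^ (T - M)"
    by (simp add: card_cartesian_product card_PiE mem(5) mem(7))
  also have "\<dots> = card (key ` {1..C})" using card_image[OF inj] mem(1) by simp
  finally have "key ` {1..C} = A0 \<times> Pi\<^sub>E {M+1..T} (\<lambda>_. B0)"
    using card_subset_eq[OF _ sub] mem(4) mem(6) by (simp add: finite_PiE)
  then have "fst ` key ` {1..C} = fst ` (A0 \<times> Pi\<^sub>E {M+1..T} (\<lambda>_. B0))" by simp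
  moreover have "B0 \<noteq> {}" using \<open>K > 0\<close> mem(7) by auto
  ultimately have "a ` {1..C} = A0" unfolding key_def by (simp add: image_image PiE_eq_empty_iff)
  then show "card (a ` {1..C}) = K0" using mem(5) by simp
qed

lemma match_one:
  fixes key :: "nat \<Rightarrow> 'x" and key' :: "nat \<Rightarrow> 'x"
  assumes inj: "inj_on key P" and inj': "inj_on key' Q" and fin: "finite P" "finite Q"
    and i: "i \<in> P" and ci: "c i > 0"
    and eq: "(\<Sum>i'\<in>P. if key i' = key i then c i' else 0) - (\<Sum>j\<in>Q. if key' j = key i then c' j else 0) = (0::real)"
  shows "\<exists>j\<in>Q. key' j = key i \<and> c' j = c i"
proof -
  have "(\<Sum>i'\<in>P. if key i' = key i then c i' else 0) = (\<Sum>i'\<in>P. if i' = i then c i' else 0)"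
    using inj i by (intro sum.cong) (auto simp: inj_on_eq_iff)
  also have "\<dots> = c i" using i fin by simp
  finally have s: "(\<Sum>j\<in>Q. if key' j = key i then c' j else 0) = c i" using eq by simp
  show ?thesis
  proof (cases "\<exists>j\<in>Q. key' j = key i")
    case True
    then obtain j where j: "j \<in> Q" "key' j = key i" by blast
    have "(\<Sum>j'\<in>Q. if key' j' = key i then c' j' else 0) = (\<Sum>j'\<in>Q. if j' = j then c' j' else 0)"
    proof (rule sum.cong[OF refl])
      fix x assume "x \<in> Q"
      have "key' x = key i \<longleftrightarrow> x = j" using inj_on_eq_iff[OF inj' \<open>x \<in> Q\<close> j(1)] j(2) by simp
      then show "(if key' x = key i then c' x else 0) = (if x = j then c' x else 0)" by simp
    qed
    also have "\<dots> = c' j" using j fin by simp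
    finally show ?thesis using s j by auto
  next
    case False
    then have "(\<Sum>j\<in>Q. if key' j = key i then c' j else 0) = 0" by (intro sum.neutral) auto
    then show ?thesis using s ci by simp
  qed
qed

theorem theorem1:
  fixes mu :: "'a \<Rightarrow> real^('m::finite \<times> 'l::finite)"
    and S1 :: "'a \<Rightarrow> real^('m \<times> 'l)^('m \<times> 'l)"
    and mf :: "real^('m \<times> 'l) \<Rightarrow> 'b \<Rightarrow> real^'m"
    and Sf :: "real^('m \<times> 'l) \<Rightarrow> 'b \<Rightarrow> real^'m^'m"
    and lagidx :: "'l \<Rightarrow> nat"
    and M T :: nat
    and C K0 K :: nat and c :: "nat \<Rightarrow> real" and a :: "nat \<Rightarrow> 'a" and b :: "nat \<Rightarrow> nat \<Rightarrow> 'b"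
    and C' K0' K' :: nat and c' :: "nat \<Rightarrow> real" and a' :: "nat \<Rightarrow> 'a" and b' :: "nat \<Rightarrow> nat \<Rightarrow> 'b"
  assumes lag: "bij_betw lagidx UNIV {1..M}"
    and MT: "0 < M" "M < T"
    and S1_pd: "\<forall>\<alpha>. posdef (S1 \<alpha>)"
    and Sf_pd: "\<forall>x \<beta>. posdef (Sf x \<beta>)"
    and m1_trans: "\<forall>\<beta> \<beta>'. \<beta> \<noteq> \<beta>' \<longrightarrow>
        (\<exists>Z. Z \<in> sets lebesgue \<and> emeasure lebesgue Z \<noteq> 0 \<and>
             (\<forall>x\<in>Z. mf x \<beta> \<noteq> mf x \<beta>' \<or> Sf x \<beta> \<noteq> Sf x \<beta>'))"
    and m1_init: "\<forall>\<alpha> \<alpha>'. \<alpha> \<noteq> \<alpha>' \<longleftrightarrow> (mu \<alpha> \<noteq> mu \<alpha>' \<or> S1 \<alpha> \<noteq> S1 \<alpha>')"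
    and m2: "\<forall>\<beta>. analytic_vec (\<lambda>x. mf x \<beta>) \<and> analytic_mat (\<lambda>x. Sf x \<beta>)"
    and mem: "msm_member M T C K0 K c a b"
    and mem': "msm_member M T C' K0' K' c' a' b'"
    and eq: "\<forall>z. msm_density mu S1 mf Sf lagidx M T C c a b z
              = msm_density mu S1 mf Sf lagidx M T C' c' a' b' z"
  shows "C = C' \<and> K0 = K0' \<and> K = K' \<and>
    (\<forall>i\<in>{1..C}. \<exists>j\<in>{1..C'}.
       c i = c' j \<and>
       (\<forall>t1\<in>{M+1..T}. \<forall>t2\<in>{M+1..T}. t1 \<noteq> t2 \<longrightarrow> b i t1 = b i t2 \<longrightarrow> b' j t1 = b' j t2) \<and>
       (\<forall>x. gauss (mu (a i)) (S1 (a i)) x = gauss (mu (a' j)) (S1 (a' j)) x) \<and>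
       (\<forall>t\<in>{M+1..T}. \<forall>x y. gauss (mf x (b i t)) (Sf x (b i t)) y
                             = gauss (mf x (b' j t)) (Sf x (b' j t)) y))"
proof -
  note lf = lag_facts[OF lag]
  have sep: "\<forall>\<beta> \<beta>'. \<beta> \<noteq> \<beta>' \<longrightarrow> (\<exists>x. mf x \<beta> \<noteq> mf x \<beta>' \<or> Sf x \<beta> \<noteq> Sf x \<beta>')"
  proof (intro allI impI)
    fix \<beta> \<beta>' :: 'b assume "\<beta> \<noteq> \<beta>'"
    then obtain Z where Z: "emeasure lebesgue Z \<noteq> 0" "\<forall>x\<in>Z. mf x \<beta> \<noteq> mf x \<beta>' \<or> Sf x \<beta> \<noteq> Sf x \<beta>'"
      using m1_trans by blast
    then have "Z \<noteq> {}" by auto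
    then show "\<exists>x. mf x \<beta> \<noteq> mf x \<beta>' \<or> Sf x \<beta> \<noteq> Sf x \<beta>'" using Z(2) by blast
  qed
  define k where "k = T - M"
  have Tk: "M + k = T" unfolding k_def using MT by simp
  define I :: "(nat + nat) set" where "I = {1..C} <+> {1..C'}"
  define d where "d = case_sum c (\<lambda>j. - c' j)"
  define A where "A = case_sum a a'"
  define Bt where "Bt = case_sum b b'"
  have finI: "finite I" unfolding I_def by simp
  have dens: "msm_density mu S1 mf Sf lagidx M T CC cc aa bb z = (\<Sum>i\<in>{1..CC}. cc i * Fn mu S1 mf Sf lagidx M T (aa i) (bb i) z)"
    for CC cc aa bb z
    unfolding msm_density_def Fn_def by (simp add: mult.assoc)
  have hyp: "\<forall>z. (\<forall>t\<in>{1..M+k}. z t \<in> (\<lambda>_. UNIV) t) \<longrightarrow> (\<Sum>\<iota>\<in>I. d \<iota> * Fn mu S1 mf Sf lagidx M (M+k) (A \<iota>) (Bt \<iota>) z) = 0"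
  proof (intro allI impI)
    fix z :: "nat \<Rightarrow> real^'m"
    have "(\<Sum>\<iota>\<in>I. d \<iota> * Fn mu S1 mf Sf lagidx M (M+k) (A \<iota>) (Bt \<iota>) z)
       = (\<Sum>i\<in>{1..C}. c i * Fn mu S1 mf Sf lagidx M T (a i) (b i) z) + (\<Sum>j\<in>{1..C'}. - c' j * Fn mu S1 mf Sf lagidx M T (a' j) (b' j) z)"
      unfolding I_def Tk by (simp add: sum.Plus d_def A_def Bt_def o_def)
    also have "\<dots> = msm_density mu S1 mf Sf lagidx M T C c a b z - msm_density mu S1 mf Sf lagidx M T C' c' a' b' z"
      unfolding dens by (simp add: sum_negf)
    also have "\<dots> = 0" using eq by simp
    finally show "(\<Sum>\<iota>\<in>I. d \<iota> * Fn mu S1 mf Sf lagidx M (M+k) (A \<iota>) (Bt \<iota>) z) = 0" .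
  qed
  have R: "\<forall>\<iota>\<in>I. (\<Sum>\<kappa>\<in>{\<kappa>\<in>I. A \<kappa> = A \<iota> \<and> (\<forall>t\<in>{M+1..M+k}. Bt \<kappa> t = Bt \<iota> t)}. d \<kappa>) = 0"
    using main_ind[OF lag S1_pd Sf_pd m1_init m2 sep, of k, THEN spec[of _ I], THEN spec[of _ d],
        THEN spec[of _ A], THEN spec[of _ Bt], THEN spec[of _ "\<lambda>_. UNIV"]] finI hyp by simp
  define key where "key i = (a i, restrict (b i) {M+1..T})" for i
  define key' where "key' j = (a' j, restrict (b' j) {M+1..T})" for j
  define KEY where "KEY = case_sum key key'"
  have KEYeq: "(A \<kappa> = A \<iota> \<and> (\<forall>t\<in>{M+1..M+k}. Bt \<kappa> t = Bt \<iota> t)) \<longleftrightarrow> KEY \<kappa> = KEY \<iota>" for \<kappa> \<iota>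
  proof -
    have r: "restrict f S = restrict g S \<longleftrightarrow> (\<forall>t\<in>S. f t = g t)" for f g :: "nat \<Rightarrow> 'b" and S
      by (auto simp: restrict_def fun_eq_iff)
    show ?thesis unfolding Tk KEY_def key_def key'_def A_def Bt_def
      by (cases \<kappa>; cases \<iota>) (simp_all add: r)
  qed
  have Rk: "(\<Sum>i\<in>{1..C}. if key i = x then c i else 0) - (\<Sum>j\<in>{1..C'}. if key' j = x then c' j else 0) = 0"
    if "\<iota> \<in> I" "KEY \<iota> = x" for \<iota> x
  proof -
    have "0 = (\<Sum>\<kappa>\<in>{\<kappa>\<in>I. A \<kappa> = A \<iota> \<and> (\<forall>t\<in>{M+1..M+k}. Bt \<kappa> t = Bt \<iota> t)}. d \<kappa>)" using R that by simp
    also have "\<dots> = (\<Sum>\<kappa>\<in>{\<kappa>\<in>I. KEY \<kappa> = x}. d \<kappa>)" unfolding KEYeq that(2) ..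
    also have "\<dots> = (\<Sum>\<kappa>\<in>I. if KEY \<kappa> = x then d \<kappa> else 0)" by (rule sum.inter_filter[OF finI])
    also have "\<dots> = (\<Sum>i\<in>{1..C}. if key i = x then c i else 0) + (\<Sum>j\<in>{1..C'}. if key' j = x then - c' j else 0)"
      unfolding I_def d_def by (simp add: sum.Plus KEY_def o_def cong: if_cong)
    also have "\<dots> = (\<Sum>i\<in>{1..C}. if key i = x then c i else 0) - (\<Sum>j\<in>{1..C'}. if key' j = x then c' j else 0)"
      by (simp add: sum_negf[symmetric] if_distrib cong: if_cong)
    finally show ?thesis by simp
  qed
  note mf1 = member_facts[OF mem MT(2)] and mf2 = member_facts[OF mem' MT(2)]
  have inj1: "inj_on key {1..C}" using mf1(6) unfolding key_def .
  have inj2: "inj_on key' {1..C'}" using mf2(6) unfolding key'_def .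
  have fwd: "\<exists>j\<in>{1..C'}. key' j = key i \<and> c' j = c i" if i: "i \<in> {1..C}" for i
  proof (rule match_one[OF inj1 inj2 _ _ i])
    show "c i > 0" using mf1(2) i by blast
    show "(\<Sum>i'\<in>{1..C}. if key i' = key i then c i' else 0) - (\<Sum>j\<in>{1..C'}. if key' j = key i then c' j else 0) = 0"
    proof -
      have "Inl i \<in> I" unfolding I_def using i by blast
      from Rk[OF this, of "key i"] show ?thesis by (simp add: KEY_def)
    qed
  qed simp_all
  have bwd: "\<exists>i\<in>{1..C}. key i = key' j \<and> c i = c' j" if j: "j \<in> {1..C'}" for j
  proof (rule match_one[OF inj2 inj1 _ _ j])
    show "c' j > 0" using mf2(2) j by blast
    have "(\<Sum>i\<in>{1..C}. if key i = key' j then c i else 0) - (\<Sum>j'\<in>{1..C'}. if key' j' = key' j then c' j' else 0) = 0"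
    proof -
      have "Inr j \<in> I" unfolding I_def using j by blast
      from Rk[OF this, of "key' j"] show ?thesis by (simp add: KEY_def)
    qed
    then show "(\<Sum>i'\<in>{1..C'}. if key' i' = key' j then c' i' else 0) - (\<Sum>i\<in>{1..C}. if key i = key' j then c i else 0) = 0"
      by simp
  qed simp_all
  have img: "key ` {1..C} = key' ` {1..C'}"
  proof
    show "key ` {1..C} \<subseteq> key' ` {1..C'}" using fwd by (force simp: image_iff)
    show "key' ` {1..C'} \<subseteq> key ` {1..C}" using bwd by (force simp: image_iff)
  qed
  have CC: "C = C'" using card_image[OF inj1] card_image[OF inj2] img by simp
  have "a ` {1..C} = a' ` {1..C'}"
  proof -
    have "fst ` key ` {1..C} = fst ` key' ` {1..C'}" using img by simp
    then show ?thesis unfolding key_def key'_def by (simp add: image_image)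
  qed
  then have KK0: "K0 = K0'" using mf1(7) mf2(7) by simp
  have "K0 * K ^ (T - M) = K0 * K' ^ (T - M)"
  proof -
    have "K0 * K ^ (T - M) = C" using mf1(1) by simp
    also have "\<dots> = C'" by (rule CC)
    also have "\<dots> = K0' * K' ^ (T - M)" by (rule mf2(1))
    finally show ?thesis using KK0 by (simp only:)
  qed
  then have "K ^ (T - M) = K' ^ (T - M)" using mf1(4) by simp
  then have KK: "K = K'" using MT by (simp add: power_eq_iff_eq_base)
  show ?thesis
  proof (intro conjI ballI)
    show "C = C'" "K0 = K0'" "K = K'" using CC KK0 KK by simp_all
  next
    fix i assume i: "i \<in> {1..C}"
    obtain j where j: "j \<in> {1..C'}" "key' j = key i" "c' j = c i" using fwd[OF i] by blast
    have aj: "a' j = a i" using j(2) unfolding key_def key'_def by simp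
    have bj: "b' j t = b i t" if "t \<in> {M+1..T}" for t
    proof -
      have "restrict (b' j) {M+1..T} t = restrict (b i) {M+1..T} t" using j(2) unfolding key_def key'_def by simp
      then show ?thesis using that by simp
    qed
    show "\<exists>j\<in>{1..C'}. c i = c' j \<and>
       (\<forall>t1\<in>{M+1..T}. \<forall>t2\<in>{M+1..T}. t1 \<noteq> t2 \<longrightarrow> b i t1 = b i t2 \<longrightarrow> b' j t1 = b' j t2) \<and>
       (\<forall>x. gauss (mu (a i)) (S1 (a i)) x = gauss (mu (a' j)) (S1 (a' j)) x) \<and>
       (\<forall>t\<in>{M+1..T}. \<forall>x y. gauss (mf x (b i t)) (Sf x (b i t)) y
                             = gauss (mf x (b' j t)) (Sf x (b' j t)) y)"
      using j(1) j(3) aj bj by (intro bexI[of _ j]) auto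
  qed
qed

end
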